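(* Let an abstract group $Q$ act on a category $\mathcal C$, where $Q$ fits into a short exact sequence $1\to Q'\to Q\xrightarrow{\pi} Q''\to1$ (identify $Q'$ with a normal subgroup of $Q$). Suppose given an action of $Q''$ on $\mathcal C^{Q'}$, and consider two $Q$-actions on $\mathcal C^{Q'}$: (A) the canonical one induced from the $Q$-action on $\mathcal C$, and (B) the one obtained by pulling back the $Q''$-action along $\pi$. Suppose given an isomorphism of actions $\gamma$ from (A) to (B) whose restriction to $Q'$ coincides with the canonical trivialization of the canonical $Q'$-action on $\mathcal C^{Q'}$. Then there is a canonical equivalence of categories $\mathcal C^Q\simeq(\mathcal C^{Q'})^{Q''}$.
   Context: An action of an abstract group $Q$ on a category $\mathcal C$ consists of functors $q\cdot-$, natural isomorphisms $1_Q\cdot-\cong\mathrm{id}$ and $q_2\cdot(q_1\cdot -)\cong (q_2q_1)\cdot -$ satisfying the usual coherence conditions; these are written as equalities. $\mathcal C^Q$ is the category of pairs $(C,\alpha)$ with isomorphisms $\alpha_q\colon q\cdot C\to C$, $\alpha_{1_Q}$ the unit isomorphism and $\alpha_{q_2}\circ(q_2\cdot\alpha_{q_1})=\alpha_{q_2q_1}$; morphisms are maps $\phi$ in $\mathcal C$ with $\alpha_{2,q}\circ(q\cdot\phi)=\phi\circ\alpha_{1,q}$. For normal $Q'\le Q$, the canonical $Q$-action on $\mathcal C^{Q'}$ is $q\cdot(C,\alpha)=(q\cdot C,{}^q\alpha)$, ${}^q\alpha_{q'}=q\cdot\alpha_{q^{-1}q'q}\colon q'\cdot(q\cdot C)=q\cdot(q^{-1}q'q\cdot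 C)\to q\cdot C$. An isomorphism between two $Q$-actions $\cdot_A,\cdot_B$ on a category is a family of natural isomorphisms $\gamma_q\colon q\cdot_A-\to q\cdot_B-$ with $\gamma_{1_Q}$ compatible with the identifications with the identity, and $\gamma_{q_2q_1}=\gamma_{q_2}\circ(q_2\cdot_A\gamma_{q_1})$ under the identifications $(q_2q_1)\cdot_A-=q_2\cdot_A(q_1\cdot_A-)$ and $(q_2q_1)\cdot_B-=q_2\cdot_B(q_1\cdot_B-)$ (more precisely, the component at an object $X$ of $\gamma_{q_2}$ being taken at $q_1\cdot_B X$). A trivialization is an isomorphism to the trivial action ($q\cdot-=\mathrm{id}$ for all $q$). For any $Q$-action on $\mathcal C$, the canonical $Q$-action on $\mathcal C^Q$ has the canonical trivialization given on $(C,\alpha)$ by the isomorphisms $\alpha_{q_0}\colon q_0\cdot(C,\alpha)\to(C,\alpha)$ in $\mathcal C^Q$, $q_0\in Q$. *)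

theory Defs
  imports "HOL-Algebra.Algebra"
begin

record ('o, 'm) category =
  cobj :: "'o set"
  carr :: "'m set"
  cdom :: "'m \<Rightarrow> 'o"
  ccod :: "'m \<Rightarrow> 'o"
  ccomp :: "'m \<Rightarrow> 'm \<Rightarrow> 'm"   (* ccomp C g f = g o f *)
  cid :: "'o \<Rightarrow> 'm"

definition chom :: "('o, 'm, 'x) category_scheme \<Rightarrow> 'o \<Rightarrow> 'o \<Rightarrow> 'm set" where
  "chom C x y = {f \<in> carr C. cdom C f = x \<and> ccod C f = y}"

definition is_category :: "('o, 'm, 'x) category_scheme \<Rightarrow> bool" where
  "is_category C \<longleftrightarrow>
     (\<forall>f\<in>carr C. cdom C f \<in> cobj C \<and> ccod C f \<in> cobj C) \<and>
     (\<forall>x\<in>cobj C. cid C x \<in> chom C x x) \<and>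
     (\<forall>f\<in>carr C. \<forall>g\<in>carr C. ccod C f = cdom C g \<longrightarrow>
        ccomp C g f \<in> chom C (cdom C f) (ccod C g)) \<and>
     (\<forall>f\<in>carr C. ccomp C (cid C (ccod C f)) f = f \<and> ccomp C f (cid C (cdom C f)) = f) \<and>
     (\<forall>f\<in>carr C. \<forall>g\<in>carr C. \<forall>h\<in>carr C. ccod C f = cdom C g \<longrightarrow> ccod C g = cdom C h \<longrightarrow>
        ccomp C h (ccomp C g f) = ccomp C (ccomp C h g) f)"

definition cinverse :: "('o, 'm, 'x) category_scheme \<Rightarrow> 'm \<Rightarrow> 'm \<Rightarrow> bool" where
  "cinverse C f g \<longleftrightarrow> f \<in> carr C \<and> g \<in> carr C \<and> cdom C g = ccod C f \<and> ccod C g = cdom C f \<and>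
     ccomp C g f = cid C (cdom C f) \<and> ccomp C f g = cid C (ccod C f)"

definition is_iso :: "('o, 'm, 'x) category_scheme \<Rightarrow> 'm \<Rightarrow> bool" where
  "is_iso C f \<longleftrightarrow> (\<exists>g. cinverse C f g)"

definition cinv :: "('o, 'm, 'x) category_scheme \<Rightarrow> 'm \<Rightarrow> 'm" where
  "cinv C f = (SOME g. cinverse C f g)"

definition is_functor ::
  "('o1, 'm1, 'x) category_scheme \<Rightarrow> ('o2, 'm2, 'y) category_scheme \<Rightarrow>
   ('o1 \<Rightarrow> 'o2) \<Rightarrow> ('m1 \<Rightarrow> 'm2) \<Rightarrow> bool" where
  "is_functor C D Fo Fm \<longleftrightarrow>
     (\<forall>x\<in>cobj C. Fo x \<in> cobj D) \<and>
     (\<forall>f\<in>carr C. Fm f \<in> chom D (Fo (cdom C f)) (Fo (ccod C f))) \<and>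
     (\<forall>x\<in>cobj C. Fm (cid C x) = cid D (Fo x)) \<and>
     (\<forall>f\<in>carr C. \<forall>g\<in>carr C. ccod C f = cdom C g \<longrightarrow>
        Fm (ccomp C g f) = ccomp D (Fm g) (Fm f))"

definition is_nat_iso ::
  "('o1, 'm1, 'x) category_scheme \<Rightarrow> ('o2, 'm2, 'y) category_scheme \<Rightarrow>
   ('o1 \<Rightarrow> 'o2) \<Rightarrow> ('m1 \<Rightarrow> 'm2) \<Rightarrow> ('o1 \<Rightarrow> 'o2) \<Rightarrow> ('m1 \<Rightarrow> 'm2) \<Rightarrow> ('o1 \<Rightarrow> 'm2) \<Rightarrow> bool" where
  "is_nat_iso C D Fo Fm Go Gm eta \<longleftrightarrow>
     (\<forall>x\<in>cobj C. eta x \<in> chom D (Fo x) (Go x) \<and> is_iso D (eta x)) \<and>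
     (\<forall>f\<in>carr C. ccomp D (eta (ccod C f)) (Fm f) = ccomp D (Gm f) (eta (cdom C f)))"

definition cat_equivalent ::
  "('o1, 'm1, 'x) category_scheme \<Rightarrow> ('o2, 'm2, 'y) category_scheme \<Rightarrow> bool" where
  "cat_equivalent C D \<longleftrightarrow>
     (\<exists>Fo Fm Go Gm eta eps.
        is_functor C D Fo Fm \<and> is_functor D C Go Gm \<and>
        is_nat_iso C C (Go \<circ> Fo) (Gm \<circ> Fm) id id eta \<and>
        is_nat_iso D D (Fo \<circ> Go) (Fm \<circ> Gm) id id eps)"

text \<open>aobj/amor: the functors q.-; aunit Z : 1.Z -> Z; amult q2 q1 Z : q2.(q1.Z) -> (q2 q1).Z\<close>
record ('g, 'o, 'm) cat_action =
  aobj :: "'g \<Rightarrow> 'o \<Rightarrow> 'o"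
  amor :: "'g \<Rightarrow> 'm \<Rightarrow> 'm"
  aunit :: "'o \<Rightarrow> 'm"
  amult :: "'g \<Rightarrow> 'g \<Rightarrow> 'o \<Rightarrow> 'm"

definition is_action ::
  "('g, 'b) monoid_scheme \<Rightarrow> ('o, 'm, 'x) category_scheme \<Rightarrow> ('g, 'o, 'm) cat_action \<Rightarrow> bool" where
  "is_action G C A \<longleftrightarrow>
     (\<forall>q\<in>carrier G. is_functor C C (aobj A q) (amor A q)) \<and>
     is_nat_iso C C (aobj A (\<one>\<^bsub>G\<^esub>)) (amor A (\<one>\<^bsub>G\<^esub>)) id id (aunit A) \<and>
     (\<forall>q2\<in>carrier G. \<forall>q1\<in>carrier G.
        is_nat_iso C C (aobj A q2 \<circ> aobj A q1) (amor A q2 \<circ> amor A q1)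
          (aobj A (q2 \<otimes>\<^bsub>G\<^esub> q1)) (amor A (q2 \<otimes>\<^bsub>G\<^esub> q1)) (amult A q2 q1)) \<and>
     (\<forall>q3\<in>carrier G. \<forall>q2\<in>carrier G. \<forall>q1\<in>carrier G. \<forall>x\<in>cobj C.
        ccomp C (amult A q3 (q2 \<otimes>\<^bsub>G\<^esub> q1) x) (amor A q3 (amult A q2 q1 x)) =
        ccomp C (amult A (q3 \<otimes>\<^bsub>G\<^esub> q2) q1 x) (amult A q3 q2 (aobj A q1 x))) \<and>
     (\<forall>q\<in>carrier G. \<forall>x\<in>cobj C.
        amult A (\<one>\<^bsub>G\<^esub>) q x = aunit A (aobj A q x) \<and>
        amult A q (\<one>\<^bsub>G\<^esub>) x = amor A q (aunit A x))"

type_synonym ('g, 'o, 'm) eqv_ob = "'o \<times> ('g \<Rightarrow> 'm)"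
type_synonym ('g, 'o, 'm) eqv_ar = "('g, 'o, 'm) eqv_ob \<times> ('g, 'o, 'm) eqv_ob \<times> 'm"

definition eqv_obj ::
  "('g, 'b) monoid_scheme \<Rightarrow> 'g set \<Rightarrow> ('o, 'm, 'x) category_scheme \<Rightarrow> ('g, 'o, 'm) cat_action \<Rightarrow>
   ('g, 'o, 'm) eqv_ob \<Rightarrow> bool" where
  "eqv_obj G H C A Xa \<longleftrightarrow>
     (let Z = fst Xa; \<alpha> = snd Xa in
       Z \<in> cobj C \<and> \<alpha> \<in> extensional H \<and>
       (\<forall>q\<in>H. \<alpha> q \<in> chom C (aobj A q Z) Z \<and> is_iso C (\<alpha> q)) \<and>
       \<alpha> (\<one>\<^bsub>G\<^esub>) = aunit A Z \<and>
       (\<forall>q2\<in>H. \<forall>q1\<in>H.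
          ccomp C (\<alpha> q2) (amor A q2 (\<alpha> q1)) = ccomp C (\<alpha> (q2 \<otimes>\<^bsub>G\<^esub> q1)) (amult A q2 q1 Z)))"

definition eqv_cat ::
  "('g, 'b) monoid_scheme \<Rightarrow> 'g set \<Rightarrow> ('o, 'm, 'x) category_scheme \<Rightarrow> ('g, 'o, 'm) cat_action \<Rightarrow>
   (('g, 'o, 'm) eqv_ob, ('g, 'o, 'm) eqv_ar) category" where
  "eqv_cat G H C A =
     \<lparr> cobj = {Xa. eqv_obj G H C A Xa},
       carr = {(Xa, Ya, \<phi>). eqv_obj G H C A Xa \<and> eqv_obj G H C A Ya \<and>
                 \<phi> \<in> chom C (fst Xa) (fst Ya) \<and>
                 (\<forall>q\<in>H. ccomp C (snd Ya q) (amor A q \<phi>) = ccomp C \<phi> (snd Xa q))},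
       cdom = (\<lambda>f. fst f),
       ccod = (\<lambda>f. fst (snd f)),
       ccomp = (\<lambda>g f. (fst f, fst (snd g), ccomp C (snd (snd g)) (snd (snd f)))),
       cid = (\<lambda>Xa. (Xa, Xa, cid C (fst Xa))) \<rparr>"

text \<open>q.(C,alpha) = (q.C, alpha') where alpha'_{q'} is
  q'.(q.C) -> (q'q).C = (q (q^-1 q' q)).C -> q.((q^-1 q' q).C) -> q.C,
  the last map being q.alpha_{q^-1 q' q}.\<close>
definition canon_obj ::
  "('g, 'b) monoid_scheme \<Rightarrow> 'g set \<Rightarrow> ('o, 'm, 'x) category_scheme \<Rightarrow> ('g, 'o, 'm) cat_action \<Rightarrow>
   'g \<Rightarrow> ('g, 'o, 'm) eqv_ob \<Rightarrow> ('g, 'o, 'm) eqv_ob" where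
  "canon_obj G N C A q Xa =
     (aobj A q (fst Xa),
      (\<lambda>q'. if q' \<in> N then
          ccomp C (amor A q (snd Xa (inv\<^bsub>G\<^esub> q \<otimes>\<^bsub>G\<^esub> q' \<otimes>\<^bsub>G\<^esub> q)))
            (ccomp C (cinv C (amult A q (inv\<^bsub>G\<^esub> q \<otimes>\<^bsub>G\<^esub> q' \<otimes>\<^bsub>G\<^esub> q) (fst Xa)))
               (amult A q' q (fst Xa)))
        else undefined))"

definition canon_action ::
  "('g, 'b) monoid_scheme \<Rightarrow> 'g set \<Rightarrow> ('o, 'm, 'x) category_scheme \<Rightarrow> ('g, 'o, 'm) cat_action \<Rightarrow>
   ('g, ('g, 'o, 'm) eqv_ob, ('g, 'o, 'm) eqv_ar) cat_action" where
  "canon_action G N C A =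
     \<lparr> aobj = canon_obj G N C A,
       amor = (\<lambda>q f. (canon_obj G N C A q (fst f), canon_obj G N C A q (fst (snd f)),
                      amor A q (snd (snd f)))),
       aunit = (\<lambda>Xa. (canon_obj G N C A (\<one>\<^bsub>G\<^esub>) Xa, Xa, aunit A (fst Xa))),
       amult = (\<lambda>q2 q1 Xa. (canon_obj G N C A q2 (canon_obj G N C A q1 Xa),
                           canon_obj G N C A (q2 \<otimes>\<^bsub>G\<^esub> q1) Xa, amult A q2 q1 (fst Xa))) \<rparr>"

definition pullback_action :: "('g \<Rightarrow> 'h) \<Rightarrow> ('h, 'o, 'm) cat_action \<Rightarrow> ('g, 'o, 'm) cat_action" where
  "pullback_action \<pi> B =
     \<lparr> aobj = (\<lambda>q. aobj B (\<pi> q)), amor = (\<lambda>q. amor B (\<pi> q)), aunit = aunit B,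
       amult = (\<lambda>q2 q1. amult B (\<pi> q2) (\<pi> q1)) \<rparr>"

definition is_action_iso ::
  "('g, 'b) monoid_scheme \<Rightarrow> ('o, 'm, 'x) category_scheme \<Rightarrow> ('g, 'o, 'm) cat_action \<Rightarrow>
   ('g, 'o, 'm) cat_action \<Rightarrow> ('g \<Rightarrow> 'o \<Rightarrow> 'm) \<Rightarrow> bool" where
  "is_action_iso G D A B \<gamma> \<longleftrightarrow>
     (\<forall>q\<in>carrier G. is_nat_iso D D (aobj A q) (amor A q) (aobj B q) (amor B q) (\<gamma> q)) \<and>
     (\<forall>Z\<in>cobj D. ccomp D (aunit B Z) (\<gamma> (\<one>\<^bsub>G\<^esub>) Z) = aunit A Z) \<and>
     (\<forall>q2\<in>carrier G. \<forall>q1\<in>carrier G. \<forall>Z\<in>cobj D.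
        ccomp D (\<gamma> (q2 \<otimes>\<^bsub>G\<^esub> q1) Z) (amult A q2 q1 Z) =
        ccomp D (amult B q2 q1 Z) (ccomp D (\<gamma> q2 (aobj B q1 Z)) (amor A q2 (\<gamma> q1 Z))))"

text \<open>The restriction of gamma to N coincides with the canonical trivialization:
  for q0 in N the action (B) is q0.Z = 1''.Z, identified with Z via the unit
  isomorphism of the G''-action; after this identification gamma q0 (C,alpha)
  must be alpha q0 : q0.(C,alpha) -> (C,alpha).\<close>
definition restricts_to_canonical_trivialization ::
  "('g, 'b) monoid_scheme \<Rightarrow> 'g set \<Rightarrow> ('o, 'm, 'x) category_scheme \<Rightarrow> ('g, 'o, 'm) cat_action \<Rightarrow>
   ('h, ('g, 'o, 'm) eqv_ob, ('g, 'o, 'm) eqv_ar) cat_action \<Rightarrow>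
   ('g \<Rightarrow> ('g, 'o, 'm) eqv_ob \<Rightarrow> ('g, 'o, 'm) eqv_ar) \<Rightarrow> bool" where
  "restricts_to_canonical_trivialization G N C A B \<gamma> \<longleftrightarrow>
     (\<forall>q0\<in>N. \<forall>Xa\<in>cobj (eqv_cat G N C A).
        ccomp (eqv_cat G N C A) (aunit B Xa) (\<gamma> q0 Xa) = (canon_obj G N C A q0 Xa, Xa, snd Xa q0))"

end

theory Submission
  imports Defs
begin

locale cat =
  fixes C :: "('o, 'm, 'x) category_scheme"
  assumes is_cat: "is_category C"
begin

lemma hom_iff: "f \<in> chom C x y \<longleftrightarrow> f \<in> carr C \<and> cdom C f = x \<and> ccod C f = y"
  by (simp add: chom_def)

lemma dom_obj[simp]: "f \<in> carr C \<Longrightarrow> cdom C f \<in> cobj C"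
  using is_cat by (simp add: is_category_def)
lemma cod_obj[simp]: "f \<in> carr C \<Longrightarrow> ccod C f \<in> cobj C"
  using is_cat by (simp add: is_category_def)

lemma id_carr[simp]: "x \<in> cobj C \<Longrightarrow> cid C x \<in> carr C"
  and id_dom[simp]: "x \<in> cobj C \<Longrightarrow> cdom C (cid C x) = x"
  and id_cod[simp]: "x \<in> cobj C \<Longrightarrow> ccod C (cid C x) = x"
  using is_cat by (auto simp: is_category_def chom_def)

lemma comp_carr[simp]: "f \<in> carr C \<Longrightarrow> g \<in> carr C \<Longrightarrow> ccod C f = cdom C g \<Longrightarrow> ccomp C g f \<in> carr C"
  and comp_dom[simp]: "f \<in> carr C \<Longrightarrow> g \<in> carr C \<Longrightarrow> ccod C f = cdom C g \<Longrightarrow> cdom C (ccomp C g f) = cdom C f"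
  and comp_cod[simp]: "f \<in> carr C \<Longrightarrow> g \<in> carr C \<Longrightarrow> ccod C f = cdom C g \<Longrightarrow> ccod C (ccomp C g f) = ccod C g"
  using is_cat by (auto simp: is_category_def chom_def)

lemma id_left[simp]: "f \<in> carr C \<Longrightarrow> ccod C f = y \<Longrightarrow> ccomp C (cid C y) f = f"
  and id_right[simp]: "f \<in> carr C \<Longrightarrow> cdom C f = x \<Longrightarrow> ccomp C f (cid C x) = f"
  using is_cat by (auto simp: is_category_def)

lemma assoc[simp]: "f \<in> carr C \<Longrightarrow> g \<in> carr C \<Longrightarrow> h \<in> carr C \<Longrightarrow> ccod C f = cdom C g \<Longrightarrow> ccod C g = cdom C h \<Longrightarrow>
   ccomp C h (ccomp C g f) = ccomp C (ccomp C h g) f"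
  using is_cat by (auto simp: is_category_def)

lemma comp_hom: "f \<in> chom C x y \<Longrightarrow> g \<in> chom C y z \<Longrightarrow> ccomp C g f \<in> chom C x z"
  by (simp add: hom_iff)

lemma id_hom: "x \<in> cobj C \<Longrightarrow> cid C x \<in> chom C x x"
  by (simp add: hom_iff)

lemma cinverse_sym: "cinverse C f g \<Longrightarrow> cinverse C g f"
  by (auto simp: cinverse_def)

lemma cinverse_unique: "cinverse C f g \<Longrightarrow> cinverse C f g' \<Longrightarrow> g = g'"
proof -
  assume a: "cinverse C f g" and b: "cinverse C f g'"
  have "g = ccomp C g (cid C (ccod C f))" using a by (simp add: cinverse_def)
  also have "\<dots> = ccomp C g (ccomp C f g')" using b by (simp add: cinverse_def)
  also have "\<dots> = ccomp C (ccomp C g f) g'" using a b unfolding cinverse_def by (metis assoc)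
  also have "\<dots> = g'" using a b unfolding cinverse_def by (metis id_left)
  finally show ?thesis .
qed

lemma cinv_inverse: "is_iso C f \<Longrightarrow> cinverse C f (cinv C f)"
  unfolding is_iso_def cinv_def by (rule someI_ex)

lemma cinv_eq: "cinverse C f g \<Longrightarrow> cinv C f = g"
proof -
  assume a: "cinverse C f g"
  then have "is_iso C f" unfolding is_iso_def by (rule exI)
  then show ?thesis using a cinverse_unique cinv_inverse by blast
qed

lemma cinv_carr[simp]: "is_iso C f \<Longrightarrow> cinv C f \<in> carr C"
  and cinv_dom[simp]: "is_iso C f \<Longrightarrow> cdom C (cinv C f) = ccod C f"
  and cinv_cod[simp]: "is_iso C f \<Longrightarrow> ccod C (cinv C f) = cdom C f"
  and cinv_l[simp]: "is_iso C f \<Longrightarrow> ccomp C (cinv C f) f = cid C (cdom C f)"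
  and cinv_r[simp]: "is_iso C f \<Longrightarrow> ccomp C f (cinv C f) = cid C (ccod C f)"
  using cinv_inverse[of f] unfolding cinverse_def by blast+

lemma iso_carr: "is_iso C f \<Longrightarrow> f \<in> carr C"
  unfolding is_iso_def cinverse_def by blast

lemma cinv_l'[simp]: "is_iso C f \<Longrightarrow> h \<in> carr C \<Longrightarrow> cdom C h = cdom C f \<Longrightarrow>
    ccomp C (ccomp C h (cinv C f)) f = h"
proof -
  assume a: "is_iso C f" "h \<in> carr C" "cdom C h = cdom C f"
  note fc = iso_carr[OF a(1)]
  have "ccomp C (ccomp C h (cinv C f)) f = ccomp C h (ccomp C (cinv C f) f)"
    using a fc by (simp del: cinv_l)
  also have "\<dots> = h" using a fc by simp
  finally show ?thesis .
qed

lemma cinv_r'[simp]: "is_iso C f \<Longrightarrow> h \<in> carr C \<Longrightarrow> cdom C h = ccod C f \<Longrightarrow>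
    ccomp C (ccomp C h f) (cinv C f) = h"
proof -
  assume a: "is_iso C f" "h \<in> carr C" "cdom C h = ccod C f"
  note fc = iso_carr[OF a(1)]
  have "ccomp C (ccomp C h f) (cinv C f) = ccomp C h (ccomp C f (cinv C f))"
    using a fc by (simp del: cinv_r)
  also have "\<dots> = h" using a fc by simp
  finally show ?thesis .
qed

lemma iso_cinv: "is_iso C f \<Longrightarrow> is_iso C (cinv C f)"
  unfolding is_iso_def[of C "cinv C f"] by (rule exI[of _ f], rule cinverse_sym, rule cinv_inverse)

lemma id_iso: "x \<in> cobj C \<Longrightarrow> is_iso C (cid C x)"
  unfolding is_iso_def cinverse_def by (rule exI[of _ "cid C x"]) simp

lemma iso_comp: "is_iso C f \<Longrightarrow> is_iso C g \<Longrightarrow> ccod C f = cdom C g \<Longrightarrow> is_iso C (ccomp C g f)"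
proof -
  assume a: "is_iso C f" "is_iso C g" "ccod C f = cdom C g"
  note fc = iso_carr[OF a(1)] iso_carr[OF a(2)]
  have 1: "ccomp C (ccomp C (cinv C f) (cinv C g)) (ccomp C g f) = cid C (cdom C f)"
  proof -
    have "ccomp C (ccomp C (cinv C f) (cinv C g)) (ccomp C g f) = ccomp C (ccomp C (cinv C f) (ccomp C (cinv C g) g)) f"
      using a fc by (simp del: cinv_l cinv_r cinv_l' cinv_r')
    also have "\<dots> = cid C (cdom C f)" using a fc by simp
    finally show ?thesis .
  qed
  have 2: "ccomp C (ccomp C g f) (ccomp C (cinv C f) (cinv C g)) = cid C (ccod C g)"
  proof -
    have "ccomp C (ccomp C g f) (ccomp C (cinv C f) (cinv C g)) = ccomp C (ccomp C g (ccomp C f (cinv C f))) (cinv C g)"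
      using a fc by (simp del: cinv_l cinv_r cinv_l' cinv_r')
    also have "\<dots> = cid C (ccod C g)" using a fc by simp
    finally show ?thesis .
  qed
  have "cinverse C (ccomp C g f) (ccomp C (cinv C f) (cinv C g))"
    unfolding cinverse_def using a fc 1 2 by (simp del: assoc)
  then show ?thesis by (auto simp: is_iso_def)
qed

lemma cancel_right: "is_iso C i \<Longrightarrow> f \<in> carr C \<Longrightarrow> g \<in> carr C \<Longrightarrow> cdom C f = ccod C i \<Longrightarrow> cdom C g = ccod C i \<Longrightarrow>
   ccomp C f i = ccomp C g i \<Longrightarrow> f = g"
proof -
  assume a: "is_iso C i" "f \<in> carr C" "g \<in> carr C" "cdom C f = ccod C i" "cdom C g = ccod C i"
    "ccomp C f i = ccomp C g i"
  have "f = ccomp C (ccomp C f i) (cinv C i)" using a(1-4) by simp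
  also have "\<dots> = ccomp C (ccomp C g i) (cinv C i)" using a(6) by simp
  also have "\<dots> = g" using a(1,3,5) by simp
  finally show ?thesis .
qed

end

lemma functor_hom: "is_functor C D Fo Fm \<Longrightarrow> f \<in> carr C \<Longrightarrow> Fm f \<in> carr D \<and> cdom D (Fm f) = Fo (cdom C f) \<and> ccod D (Fm f) = Fo (ccod C f)"
  by (simp add: is_functor_def chom_def)

lemma functor_comp: "is_functor C D Fo Fm \<Longrightarrow> f \<in> carr C \<Longrightarrow> g \<in> carr C \<Longrightarrow> ccod C f = cdom C g \<Longrightarrow>
   Fm (ccomp C g f) = ccomp D (Fm g) (Fm f)"
  by (simp add: is_functor_def)

lemma functor_id: "is_functor C D Fo Fm \<Longrightarrow> x \<in> cobj C \<Longrightarrow> Fm (cid C x) = cid D (Fo x)"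
  by (simp add: is_functor_def)

lemma functor_obj: "is_functor C D Fo Fm \<Longrightarrow> x \<in> cobj C \<Longrightarrow> Fo x \<in> cobj D"
  by (simp add: is_functor_def)

lemma (in cat) id_nat_iso:
  assumes "\<And>x. x \<in> cobj C \<Longrightarrow> Fo x = x" "\<And>f. f \<in> carr C \<Longrightarrow> Fm f = f"
  shows "is_nat_iso C C Fo Fm id id (cid C)"
  unfolding is_nat_iso_def using assms by (simp add: hom_iff id_iso)

lemma eqv_cat_simps[simp]:
  "cobj (eqv_cat G H C A) = {Xa. eqv_obj G H C A Xa}"
  "cdom (eqv_cat G H C A) = fst"
  "ccod (eqv_cat G H C A) = (\<lambda>f. fst (snd f))"
  "ccomp (eqv_cat G H C A) g f = (fst f, fst (snd g), ccomp C (snd (snd g)) (snd (snd f)))"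
  "cid (eqv_cat G H C A) U = (U, U, cid C (fst U))"
  by (simp_all add: eqv_cat_def)

lemma eqv_carr_iff:
  "f \<in> carr (eqv_cat G H C A) \<longleftrightarrow> eqv_obj G H C A (fst f) \<and> eqv_obj G H C A (fst (snd f)) \<and>
     snd (snd f) \<in> chom C (fst (fst f)) (fst (fst (snd f))) \<and>
     (\<forall>q\<in>H. ccomp C (snd (fst (snd f)) q) (amor A q (snd (snd f))) = ccomp C (snd (snd f)) (snd (fst f) q))"
  by (cases f) (auto simp: eqv_cat_def)

lemma eqv_obj_iff:
  "eqv_obj G H C A Xa \<longleftrightarrow>
       fst Xa \<in> cobj C \<and> snd Xa \<in> extensional H \<and>
       (\<forall>q\<in>H. snd Xa q \<in> chom C (aobj A q (fst Xa)) (fst Xa) \<and> is_iso C (snd Xa q)) \<and>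
       snd Xa (\<one>\<^bsub>G\<^esub>) = aunit A (fst Xa) \<and>
       (\<forall>q2\<in>H. \<forall>q1\<in>H.
          ccomp C (snd Xa q2) (amor A q2 (snd Xa q1)) = ccomp C (snd Xa (q2 \<otimes>\<^bsub>G\<^esub> q1)) (amult A q2 q1 (fst Xa)))"
  by (simp add: eqv_obj_def Let_def)

locale eqv_setup = cat C for C :: "('o, 'm, 'x) category_scheme" +
  fixes G :: "('g, 'b) monoid_scheme" and H :: "'g set" and A :: "('g, 'o, 'm) cat_action"
  assumes func: "\<And>q. q \<in> H \<Longrightarrow> is_functor C C (aobj A q) (amor A q)"
begin

abbreviation "E \<equiv> eqv_cat G H C A"

lemma amor_carr[simp]: "q \<in> H \<Longrightarrow> f \<in> carr C \<Longrightarrow> amor A q f \<in> carr C"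
  and amor_dom[simp]: "q \<in> H \<Longrightarrow> f \<in> carr C \<Longrightarrow> cdom C (amor A q f) = aobj A q (cdom C f)"
  and amor_cod[simp]: "q \<in> H \<Longrightarrow> f \<in> carr C \<Longrightarrow> ccod C (amor A q f) = aobj A q (ccod C f)"
  using functor_hom[OF func] by auto

lemma amor_comp[simp]: "q \<in> H \<Longrightarrow> f \<in> carr C \<Longrightarrow> g \<in> carr C \<Longrightarrow> ccod C f = cdom C g \<Longrightarrow>
   amor A q (ccomp C g f) = ccomp C (amor A q g) (amor A q f)"
  using functor_comp[OF func] by auto

lemma amor_id[simp]: "q \<in> H \<Longrightarrow> x \<in> cobj C \<Longrightarrow> amor A q (cid C x) = cid C (aobj A q x)"
  using functor_id[OF func] by auto

lemma aobj_obj[simp]: "q \<in> H \<Longrightarrow> x \<in> cobj C \<Longrightarrow> aobj A q x \<in> cobj C"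
  using functor_obj[OF func] by auto

lemma E_category: "is_category E"
proof -
  have 1: "\<forall>f\<in>carr E. cdom E f \<in> cobj E \<and> ccod E f \<in> cobj E"
    by (auto simp: eqv_carr_iff)
  have 2: "\<forall>x\<in>cobj E. cid E x \<in> chom E x x"
  proof
    fix x assume x: "x \<in> cobj E"
    then have o: "eqv_obj G H C A x" by simp
    then have "\<forall>q\<in>H. ccomp C (snd x q) (amor A q (cid C (fst x))) = ccomp C (cid C (fst x)) (snd x q)"
      by (auto simp: eqv_obj_iff hom_iff)
    then show "cid E x \<in> chom E x x" using o by (simp add: chom_def eqv_carr_iff eqv_obj_iff hom_iff)
  qed
  have 3: "\<forall>f\<in>carr E. \<forall>g\<in>carr E. ccod E f = cdom E g \<longrightarrow>
        ccomp E g f \<in> chom E (cdom E f) (ccod E g)"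
  proof (intro ballI impI)
    fix f g assume f: "f \<in> carr E" and g: "g \<in> carr E" and fg: "ccod E f = cdom E g"
    obtain U Y \<phi> where fe: "f = (U, Y, \<phi>)" by (cases f) auto
    obtain Y' W \<psi> where ge: "g = (Y', W, \<psi>)" by (cases g) auto
    have Y': "Y' = Y" using fg fe ge by simp
    have fX: "eqv_obj G H C A U" "eqv_obj G H C A Y" "\<phi> \<in> chom C (fst U) (fst Y)"
      and fc: "\<And>q. q \<in> H \<Longrightarrow> ccomp C (snd Y q) (amor A q \<phi>) = ccomp C \<phi> (snd U q)"
      using f fe by (auto simp: eqv_carr_iff)
    have gX: "eqv_obj G H C A W" "\<psi> \<in> chom C (fst Y) (fst W)"
      and gc: "\<And>q. q \<in> H \<Longrightarrow> ccomp C (snd W q) (amor A q \<psi>) = ccomp C \<psi> (snd Y q)"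
      using g ge Y' by (auto simp: eqv_carr_iff)
    have "ccomp C (snd W q) (amor A q (ccomp C \<psi> \<phi>)) = ccomp C (ccomp C \<psi> \<phi>) (snd U q)" if q: "q \<in> H" for q
    proof -
      have hX: "snd U q \<in> chom C (aobj A q (fst U)) (fst U)" "snd Y q \<in> chom C (aobj A q (fst Y)) (fst Y)"
        "snd W q \<in> chom C (aobj A q (fst W)) (fst W)"
        using fX gX q by (auto simp: eqv_obj_iff)
      have "ccomp C (snd W q) (amor A q (ccomp C \<psi> \<phi>)) = ccomp C (ccomp C (snd W q) (amor A q \<psi>)) (amor A q \<phi>)"
        using hX fX gX q by (simp add: hom_iff)
      also have "\<dots> = ccomp C (ccomp C \<psi> (snd Y q)) (amor A q \<phi>)" using gc q by simp
      also have "\<dots> = ccomp C \<psi> (ccomp C (snd Y q) (amor A q \<phi>))"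
        using hX fX gX q by (simp add: hom_iff)
      also have "\<dots> = ccomp C \<psi> (ccomp C \<phi> (snd U q))" using fc q by simp
      also have "\<dots> = ccomp C (ccomp C \<psi> \<phi>) (snd U q)" using hX fX gX q by (simp add: hom_iff)
      finally show ?thesis .
    qed
    then show "ccomp E g f \<in> chom E (cdom E f) (ccod E g)"
      using fX gX fe ge Y' by (auto simp: chom_def eqv_carr_iff hom_iff)
  qed
  have 4: "\<forall>f\<in>carr E. ccomp E (cid E (ccod E f)) f = f \<and> ccomp E f (cid E (cdom E f)) = f"
    by (auto simp: eqv_carr_iff hom_iff)
  have 5: "\<forall>f\<in>carr E. \<forall>g\<in>carr E. \<forall>h\<in>carr E. ccod E f = cdom E g \<longrightarrow> ccod E g = cdom E h \<longrightarrow>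
        ccomp E h (ccomp E g f) = ccomp E (ccomp E h g) f"
    by (auto simp: eqv_carr_iff hom_iff)
  show ?thesis unfolding is_category_def using 1 2 3 4 5 by blast
qed

lemma E_hom_eq: "f \<in> chom E U Y \<Longrightarrow> g \<in> chom E U Y \<Longrightarrow> snd (snd f) = snd (snd g) \<Longrightarrow> f = g"
  by (cases f, cases g) (auto simp: chom_def)

lemma E_iso_C: assumes "is_iso E f" shows "is_iso C (snd (snd f))"
proof -
  obtain g where g: "cinverse E f g" using assms by (auto simp: is_iso_def)
  then have "cinverse C (snd (snd f)) (snd (snd g))"
    by (auto simp: cinverse_def eqv_carr_iff hom_iff)
  then show ?thesis by (auto simp: is_iso_def)
qed

lemma C_iso_E: assumes f: "f \<in> carr E" and i: "is_iso C (snd (snd f))" shows "is_iso E f"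
proof -
  obtain U Y \<phi> where fe: "f = (U, Y, \<phi>)" by (cases f) auto
  have fX: "eqv_obj G H C A U" "eqv_obj G H C A Y" "\<phi> \<in> chom C (fst U) (fst Y)"
    and fc: "\<And>q. q \<in> H \<Longrightarrow> ccomp C (snd Y q) (amor A q \<phi>) = ccomp C \<phi> (snd U q)"
    using f fe by (auto simp: eqv_carr_iff)
  have ii: "is_iso C \<phi>" using i fe by simp
  have "ccomp C (snd U q) (amor A q (cinv C \<phi>)) = ccomp C (cinv C \<phi>) (snd Y q)" if q: "q \<in> H" for q
  proof -
    have hX: "snd U q \<in> chom C (aobj A q (fst U)) (fst U)" "snd Y q \<in> chom C (aobj A q (fst Y)) (fst Y)"
      using fX q by (auto simp: eqv_obj_iff)
    have oY: "fst Y \<in> cobj C" using fX by (simp add: eqv_obj_iff)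
    have k: "ccomp C (amor A q \<phi>) (amor A q (cinv C \<phi>)) = cid C (aobj A q (fst Y))"
    proof -
      have "ccomp C (amor A q \<phi>) (amor A q (cinv C \<phi>)) = amor A q (ccomp C \<phi> (cinv C \<phi>))"
        using fX ii q by (simp add: hom_iff del: cinv_r)
      also have "\<dots> = cid C (aobj A q (fst Y))" using fX ii q oY by (simp add: hom_iff)
      finally show ?thesis .
    qed
    have "ccomp C (cinv C \<phi>) (snd Y q) = ccomp C (ccomp C (cinv C \<phi>) (snd Y q)) (cid C (aobj A q (fst Y)))"
      using hX fX ii by (simp add: hom_iff)
    also have "\<dots> = ccomp C (ccomp C (cinv C \<phi>) (snd Y q)) (ccomp C (amor A q \<phi>) (amor A q (cinv C \<phi>)))"
      by (simp only: k)
    also have "\<dots> = ccomp C (ccomp C (cinv C \<phi>) (ccomp C (snd Y q) (amor A q \<phi>))) (amor A q (cinv C \<phi>))"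
      using hX fX ii q by (simp add: hom_iff)
    also have "\<dots> = ccomp C (ccomp C (cinv C \<phi>) (ccomp C \<phi> (snd U q))) (amor A q (cinv C \<phi>))"
      using fc q by simp
    also have "\<dots> = ccomp C (snd U q) (amor A q (cinv C \<phi>))"
      using hX fX ii q by (simp add: hom_iff)
    finally show ?thesis by simp
  qed
  then have "(Y, U, cinv C \<phi>) \<in> carr E" using fX ii by (auto simp: eqv_carr_iff hom_iff)
  then have "cinverse E f (Y, U, cinv C \<phi>)" using f fe fX ii by (auto simp: cinverse_def hom_iff)
  then show ?thesis unfolding is_iso_def by (rule exI)
qed

end

locale main_setup =
  fixes G :: "('g, 'b) monoid_scheme" and G'' :: "('h, 'c) monoid_scheme"
    and \<pi> :: "'g \<Rightarrow> 'h" and N :: "'g set"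
    and C :: "('o, 'm) category" and A :: "('g, 'o, 'm) cat_action"
    and B :: "('h, ('g, 'o, 'm) eqv_ob, ('g, 'o, 'm) eqv_ar) cat_action"
    and \<gamma> :: "'g \<Rightarrow> ('g, 'o, 'm) eqv_ob \<Rightarrow> ('g, 'o, 'm) eqv_ar"
  assumes grpG: "group G" and grpH: "group G''"
    and hom: "\<pi> \<in> hom G G''" and surj: "\<pi> ` carrier G = carrier G''"
    and nrm: "N \<lhd> G" and ker: "kernel G G'' \<pi> = N"
    and catC: "is_category C"
    and actA: "is_action G C A"
    and actB: "is_action G'' (eqv_cat G N C A) B"
    and isoG: "is_action_iso G (eqv_cat G N C A) (canon_action G N C A) (pullback_action \<pi> B) \<gamma>"
    and triv: "restricts_to_canonical_trivialization G N C A B \<gamma>"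
begin

abbreviation "D \<equiv> eqv_cat G N C A"

lemma N_iff: "n \<in> N \<longleftrightarrow> n \<in> carrier G \<and> \<pi> n = \<one>\<^bsub>G''\<^esub>"
  using ker by (auto simp: kernel_def)

lemma N_carr[simp]: "n \<in> N \<Longrightarrow> n \<in> carrier G"
  by (simp add: N_iff)

lemma N_sub: "N \<subseteq> carrier G" using N_carr by blast

lemma gh: "group_hom G G'' \<pi>"
  using grpG grpH hom by (simp add: group_hom_def group_hom_axioms_def)

lemma pi_carr[simp]: "q \<in> carrier G \<Longrightarrow> \<pi> q \<in> carrier G''"
  using hom by (auto simp: hom_def)

lemma pi_mult[simp]: "q1 \<in> carrier G \<Longrightarrow> q2 \<in> carrier G \<Longrightarrow> \<pi> (q1 \<otimes>\<^bsub>G\<^esub> q2) = \<pi> q1 \<otimes>\<^bsub>G''\<^esub> \<pi> q2"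
  using hom by (simp add: hom_mult)

lemma pi_one[simp]: "\<pi> \<one>\<^bsub>G\<^esub> = \<one>\<^bsub>G''\<^esub>"
  using gh by (rule group_hom.hom_one)

lemma subN: "subgroup N G" using nrm by (rule normal_imp_subgroup)

lemma one_N[simp]: "\<one>\<^bsub>G\<^esub> \<in> N"
  using subN by (rule subgroup.one_closed)

lemma mult_N[simp]: "n1 \<in> N \<Longrightarrow> n2 \<in> N \<Longrightarrow> n1 \<otimes>\<^bsub>G\<^esub> n2 \<in> N"
  using subN by (rule subgroup.m_closed)

lemma conj_N: "q \<in> carrier G \<Longrightarrow> n \<in> N \<Longrightarrow> inv\<^bsub>G\<^esub> q \<otimes>\<^bsub>G\<^esub> n \<otimes>\<^bsub>G\<^esub> q \<in> N"
  by (rule normal.inv_op_closed1[OF nrm])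

definition sec :: "'h \<Rightarrow> 'g" where "sec h = (SOME q. q \<in> carrier G \<and> \<pi> q = h)"

lemma sec: "h \<in> carrier G'' \<Longrightarrow> sec h \<in> carrier G \<and> \<pi> (sec h) = h"
proof -
  assume "h \<in> carrier G''"
  then have "h \<in> \<pi> ` carrier G" using surj by simp
  then obtain q where "q \<in> carrier G" "\<pi> q = h" by (rule imageE) simp
  then have "\<exists>q. q \<in> carrier G \<and> \<pi> q = h" by blast
  then show ?thesis unfolding sec_def by (rule someI_ex)
qed

lemma sec_carr[simp]: "h \<in> carrier G'' \<Longrightarrow> sec h \<in> carrier G"
  and pi_sec[simp]: "h \<in> carrier G'' \<Longrightarrow> \<pi> (sec h) = h"
  using sec by auto

lemma funcA: "q \<in> carrier G \<Longrightarrow> is_functor C C (aobj A q) (amor A q)"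
  using actA unfolding is_action_def by blast

end

sublocale main_setup \<subseteq> CG: eqv_setup C G "carrier G" A
  by (unfold_locales) (auto simp: catC funcA)

sublocale main_setup \<subseteq> CN: eqv_setup C G N A
  by (unfold_locales) (auto simp: catC funcA)

context main_setup begin

lemma D_cat: "is_category D" by (rule CN.E_category)

lemma funcB: "h \<in> carrier G'' \<Longrightarrow> is_functor D D (aobj B h) (amor B h)"
  using actB unfolding is_action_def by blast

end

sublocale main_setup \<subseteq> DB: eqv_setup D G'' "carrier G''" B
  by (unfold_locales) (auto simp: D_cat funcB)

context main_setup begin

lemma m_nat: "q2 \<in> carrier G \<Longrightarrow> q1 \<in> carrier G \<Longrightarrow>
  is_nat_iso C C (aobj A q2 \<circ> aobj A q1) (amor A q2 \<circ> amor A q1) (aobj A (q2 \<otimes>\<^bsub>G\<^esub> q1)) (amor A (q2 \<otimes>\<^bsub>G\<^esub> q1)) (amult A q2 q1)"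
  using actA unfolding is_action_def by blast

lemma m_props:
  assumes "q2 \<in> carrier G" "q1 \<in> carrier G" "Z \<in> cobj C"
  shows "amult A q2 q1 Z \<in> carr C \<and> cdom C (amult A q2 q1 Z) = aobj A q2 (aobj A q1 Z) \<and>
         ccod C (amult A q2 q1 Z) = aobj A (q2 \<otimes>\<^bsub>G\<^esub> q1) Z \<and> is_iso C (amult A q2 q1 Z)"
proof -
  have "amult A q2 q1 Z \<in> chom C (aobj A q2 (aobj A q1 Z)) (aobj A (q2 \<otimes>\<^bsub>G\<^esub> q1) Z) \<and> is_iso C (amult A q2 q1 Z)"
    using m_nat[OF assms(1,2)] assms(3) unfolding is_nat_iso_def by simp
  then show ?thesis by (simp add: chom_def)
qed

lemma m_carr[simp]: "q2 \<in> carrier G \<Longrightarrow> q1 \<in> carrier G \<Longrightarrow> Z \<in> cobj C \<Longrightarrow> amult A q2 q1 Z \<in> carr C"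
  and m_dom[simp]: "q2 \<in> carrier G \<Longrightarrow> q1 \<in> carrier G \<Longrightarrow> Z \<in> cobj C \<Longrightarrow> cdom C (amult A q2 q1 Z) = aobj A q2 (aobj A q1 Z)"
  and m_cod[simp]: "q2 \<in> carrier G \<Longrightarrow> q1 \<in> carrier G \<Longrightarrow> Z \<in> cobj C \<Longrightarrow> ccod C (amult A q2 q1 Z) = aobj A (q2 \<otimes>\<^bsub>G\<^esub> q1) Z"
  and m_iso[simp]: "q2 \<in> carrier G \<Longrightarrow> q1 \<in> carrier G \<Longrightarrow> Z \<in> cobj C \<Longrightarrow> is_iso C (amult A q2 q1 Z)"
  using m_props by auto

lemma D_obj_iff: "U \<in> cobj D \<longleftrightarrow> eqv_obj G N C A U" by (simp only: eqv_cat_simps mem_Collect_eq)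

lemma Dobj_fst[simp]: "U \<in> cobj D \<Longrightarrow> fst U \<in> cobj C"
  unfolding D_obj_iff eqv_obj_iff by blast

lemma Dobj_snd: "U \<in> cobj D \<Longrightarrow> n \<in> N \<Longrightarrow> snd U n \<in> carr C \<and> cdom C (snd U n) = aobj A n (fst U) \<and> ccod C (snd U n) = fst U \<and> is_iso C (snd U n)"
  unfolding D_obj_iff eqv_obj_iff chom_def by blast

lemma Dcarr_C: "f \<in> carr D \<Longrightarrow> snd (snd f) \<in> carr C \<and> cdom C (snd (snd f)) = fst (fst f) \<and> ccod C (snd (snd f)) = fst (fst (snd f))"
  unfolding eqv_carr_iff chom_def by blast

lemma Dcarr_compat: "f \<in> carr D \<Longrightarrow> n \<in> N \<Longrightarrow>
   ccomp C (snd (fst (snd f)) n) (amor A n (snd (snd f))) = ccomp C (snd (snd f)) (snd (fst f) n)"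
  unfolding eqv_carr_iff by blast

abbreviation "cg q U \<equiv> snd (snd (\<gamma> q U))"

lemma gam_nat: "q \<in> carrier G \<Longrightarrow>
   is_nat_iso D D (canon_obj G N C A q) (amor (canon_action G N C A) q) (aobj B (\<pi> q)) (amor B (\<pi> q)) (\<gamma> q)"
proof -
  assume q: "q \<in> carrier G"
  have "is_nat_iso D D (aobj (canon_action G N C A) q) (amor (canon_action G N C A) q)
     (aobj (pullback_action \<pi> B) q) (amor (pullback_action \<pi> B) q) (\<gamma> q)"
    using isoG q unfolding is_action_iso_def by blast
  then show ?thesis by (simp add: canon_action_def pullback_action_def del: eqv_cat_simps)
qed

lemma gam_hom: "q \<in> carrier G \<Longrightarrow> U \<in> cobj D \<Longrightarrow>
   \<gamma> q U \<in> chom D (canon_obj G N C A q U) (aobj B (\<pi> q) U) \<and> is_iso D (\<gamma> q U)"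
  using gam_nat unfolding is_nat_iso_def by blast

lemma gam_carr: "q \<in> carrier G \<Longrightarrow> U \<in> cobj D \<Longrightarrow> \<gamma> q U \<in> carr D"
  using gam_hom by (simp add: chom_def)

lemma canon_fst[simp]: "fst (canon_obj G N C A q U) = aobj A q (fst U)"
  by (simp add: canon_obj_def)

lemma canon_snd: "n \<in> N \<Longrightarrow> snd (canon_obj G N C A q U) n =
   ccomp C (amor A q (snd U (inv\<^bsub>G\<^esub> q \<otimes>\<^bsub>G\<^esub> n \<otimes>\<^bsub>G\<^esub> q)))
     (ccomp C (cinv C (amult A q (inv\<^bsub>G\<^esub> q \<otimes>\<^bsub>G\<^esub> n \<otimes>\<^bsub>G\<^esub> q) (fst U))) (amult A n q (fst U)))"
  by (simp add: canon_obj_def)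

lemma gam_fst[simp]: "q \<in> carrier G \<Longrightarrow> U \<in> cobj D \<Longrightarrow> fst (\<gamma> q U) = canon_obj G N C A q U"
  and gam_fst2[simp]: "q \<in> carrier G \<Longrightarrow> U \<in> cobj D \<Longrightarrow> fst (snd (\<gamma> q U)) = aobj B (\<pi> q) U"
  using gam_hom[of q U] unfolding chom_def by simp_all

lemma canon_obj_D: "q \<in> carrier G \<Longrightarrow> U \<in> cobj D \<Longrightarrow> canon_obj G N C A q U \<in> cobj D"
  using gam_carr[of q U] gam_fst[of q U] unfolding eqv_carr_iff by simp

lemma Bobj_D: "h \<in> carrier G'' \<Longrightarrow> U \<in> cobj D \<Longrightarrow> aobj B h U \<in> cobj D"
  using DB.aobj_obj by blast

lemma cg_carr[simp]: "q \<in> carrier G \<Longrightarrow> U \<in> cobj D \<Longrightarrow> cg q U \<in> carr C"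
  and cg_dom[simp]: "q \<in> carrier G \<Longrightarrow> U \<in> cobj D \<Longrightarrow> cdom C (cg q U) = aobj A q (fst U)"
  and cg_cod[simp]: "q \<in> carrier G \<Longrightarrow> U \<in> cobj D \<Longrightarrow> ccod C (cg q U) = fst (aobj B (\<pi> q) U)"
  and cg_iso[simp]: "q \<in> carrier G \<Longrightarrow> U \<in> cobj D \<Longrightarrow> is_iso C (cg q U)"
  using gam_hom[of q U] Dcarr_C[of "\<gamma> q U"] CN.E_iso_C[of "\<gamma> q U"] gam_carr[of q U]
  by (simp_all add: chom_def)

end

context main_setup begin

abbreviation "uB U \<equiv> snd (snd (aunit B U))"
abbreviation "bm h f \<equiv> snd (snd (amor B h f))"
abbreviation "mB h2 h1 U \<equiv> snd (snd (amult B h2 h1 U))"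

lemma gam_natural: "q \<in> carrier G \<Longrightarrow> f \<in> carr D \<Longrightarrow>
   ccomp C (cg q (fst (snd f))) (amor A q (snd (snd f))) = ccomp C (bm (\<pi> q) f) (cg q (fst f))"
proof -
  assume q: "q \<in> carrier G" and f: "f \<in> carr D"
  have "ccomp D (\<gamma> q (ccod D f)) (amor (canon_action G N C A) q f) = ccomp D (amor B (\<pi> q) f) (\<gamma> q (cdom D f))"
    using gam_nat[OF q] f unfolding is_nat_iso_def by blast
  then show ?thesis by (simp add: canon_action_def)
qed

lemma gam_unit: "U \<in> cobj D \<Longrightarrow> ccomp C (uB U) (cg \<one>\<^bsub>G\<^esub> U) = aunit A (fst U)"
proof -
  assume U: "U \<in> cobj D"
  have "ccomp D (aunit (pullback_action \<pi> B) U) (\<gamma> \<one>\<^bsub>G\<^esub> U) = aunit (canon_action G N C A) U"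
    using isoG U unfolding is_action_iso_def by blast
  then show ?thesis by (simp add: canon_action_def pullback_action_def)
qed

lemma gam_cocycle: "q2 \<in> carrier G \<Longrightarrow> q1 \<in> carrier G \<Longrightarrow> U \<in> cobj D \<Longrightarrow>
  ccomp C (cg (q2 \<otimes>\<^bsub>G\<^esub> q1) U) (amult A q2 q1 (fst U)) =
  ccomp C (mB (\<pi> q2) (\<pi> q1) U) (ccomp C (cg q2 (aobj B (\<pi> q1) U)) (amor A q2 (cg q1 U)))"
proof -
  assume q: "q2 \<in> carrier G" "q1 \<in> carrier G" and U: "U \<in> cobj D"
  have "ccomp D (\<gamma> (q2 \<otimes>\<^bsub>G\<^esub> q1) U) (amult (canon_action G N C A) q2 q1 U) =
        ccomp D (amult (pullback_action \<pi> B) q2 q1 U) (ccomp D (\<gamma> q2 (aobj (pullback_action \<pi> B) q1 U))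
          (amor (canon_action G N C A) q2 (\<gamma> q1 U)))"
    using isoG q U unfolding is_action_iso_def by blast
  then show ?thesis by (simp add: canon_action_def pullback_action_def)
qed

lemma gam_triv: "n \<in> N \<Longrightarrow> U \<in> cobj D \<Longrightarrow> ccomp C (uB U) (cg n U) = snd U n"
proof -
  assume n: "n \<in> N" and U: "U \<in> cobj D"
  have "ccomp D (aunit B U) (\<gamma> n U) = (canon_obj G N C A n U, U, snd U n)"
    using triv n U unfolding restricts_to_canonical_trivialization_def by blast
  then show ?thesis by simp
qed

lemma B_unit_nat: "is_nat_iso D D (aobj B \<one>\<^bsub>G''\<^esub>) (amor B \<one>\<^bsub>G''\<^esub>) id id (aunit B)"
  using actB unfolding is_action_def by blast

lemma B_mult_nat: "h2 \<in> carrier G'' \<Longrightarrow> h1 \<in> carrier G'' \<Longrightarrow>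
  is_nat_iso D D (aobj B h2 \<circ> aobj B h1) (amor B h2 \<circ> amor B h1) (aobj B (h2 \<otimes>\<^bsub>G''\<^esub> h1)) (amor B (h2 \<otimes>\<^bsub>G''\<^esub> h1)) (amult B h2 h1)"
  using actB unfolding is_action_def by blast

lemma B_unit_law: "h \<in> carrier G'' \<Longrightarrow> U \<in> cobj D \<Longrightarrow> amult B \<one>\<^bsub>G''\<^esub> h U = aunit B (aobj B h U)"
  using actB unfolding is_action_def by blast

lemma Bu_hom: "U \<in> cobj D \<Longrightarrow> aunit B U \<in> chom D (aobj B \<one>\<^bsub>G''\<^esub> U) U"
  using B_unit_nat unfolding is_nat_iso_def id_apply by blast

lemma Bm_hom: "h2 \<in> carrier G'' \<Longrightarrow> h1 \<in> carrier G'' \<Longrightarrow> U \<in> cobj D \<Longrightarrow>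
   amult B h2 h1 U \<in> chom D (aobj B h2 (aobj B h1 U)) (aobj B (h2 \<otimes>\<^bsub>G''\<^esub> h1) U) \<and> is_iso D (amult B h2 h1 U)"
  using B_mult_nat unfolding is_nat_iso_def o_apply by blast

lemma one_G''[simp]: "\<one>\<^bsub>G''\<^esub> \<in> carrier G''"
  using grpH by (simp add: group.is_monoid monoid.one_closed)

lemma uB_carr[simp]: "U \<in> cobj D \<Longrightarrow> uB U \<in> carr C"
  and uB_dom[simp]: "U \<in> cobj D \<Longrightarrow> cdom C (uB U) = fst (aobj B \<one>\<^bsub>G''\<^esub> U)"
  and uB_cod[simp]: "U \<in> cobj D \<Longrightarrow> ccod C (uB U) = fst U"
  using Bu_hom[of U] Dcarr_C[of "aunit B U"] unfolding chom_def by auto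

lemma mB_carr[simp]: "h2 \<in> carrier G'' \<Longrightarrow> h1 \<in> carrier G'' \<Longrightarrow> U \<in> cobj D \<Longrightarrow> mB h2 h1 U \<in> carr C"
  and mB_dom[simp]: "h2 \<in> carrier G'' \<Longrightarrow> h1 \<in> carrier G'' \<Longrightarrow> U \<in> cobj D \<Longrightarrow> cdom C (mB h2 h1 U) = fst (aobj B h2 (aobj B h1 U))"
  and mB_cod[simp]: "h2 \<in> carrier G'' \<Longrightarrow> h1 \<in> carrier G'' \<Longrightarrow> U \<in> cobj D \<Longrightarrow> ccod C (mB h2 h1 U) = fst (aobj B (h2 \<otimes>\<^bsub>G''\<^esub> h1) U)"
  and mB_iso[simp]: "h2 \<in> carrier G'' \<Longrightarrow> h1 \<in> carrier G'' \<Longrightarrow> U \<in> cobj D \<Longrightarrow> is_iso C (mB h2 h1 U)"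
  using Bm_hom[of h2 h1 U] Dcarr_C[of "amult B h2 h1 U"] CN.E_iso_C[of "amult B h2 h1 U"] unfolding chom_def by auto

lemma bm_carr[simp]: "h \<in> carrier G'' \<Longrightarrow> f \<in> carr D \<Longrightarrow> bm h f \<in> carr C"
  and bm_dom[simp]: "h \<in> carrier G'' \<Longrightarrow> f \<in> carr D \<Longrightarrow> cdom C (bm h f) = fst (aobj B h (fst f))"
  and bm_cod[simp]: "h \<in> carrier G'' \<Longrightarrow> f \<in> carr D \<Longrightarrow> ccod C (bm h f) = fst (aobj B h (fst (snd f)))"
  using DB.amor_carr[of h f] DB.amor_dom[of h f] DB.amor_cod[of h f] Dcarr_C[of "amor B h f"] by auto

lemma Bobj_fst[simp]: "h \<in> carrier G'' \<Longrightarrow> U \<in> cobj D \<Longrightarrow> fst (aobj B h U) \<in> cobj C"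
  using Bobj_D by simp

end

context main_setup begin

definition F0 :: "('g, 'o, 'm) eqv_ob \<Rightarrow> ('g, 'o, 'm) eqv_ob" where
  "F0 Xa = (fst Xa, restrict (snd Xa) N)"

abbreviation "CGobj Xa \<equiv> eqv_obj G (carrier G) C A Xa"

lemma CG_parts:
  assumes "CGobj Xa"
  shows "fst Xa \<in> cobj C" "snd Xa \<in> extensional (carrier G)"
    "\<And>q. q \<in> carrier G \<Longrightarrow> snd Xa q \<in> carr C \<and> cdom C (snd Xa q) = aobj A q (fst Xa) \<and> ccod C (snd Xa q) = fst Xa \<and> is_iso C (snd Xa q)"
    "snd Xa \<one>\<^bsub>G\<^esub> = aunit A (fst Xa)"
    "\<And>q2 q1. q2 \<in> carrier G \<Longrightarrow> q1 \<in> carrier G \<Longrightarrow>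
       ccomp C (snd Xa q2) (amor A q2 (snd Xa q1)) = ccomp C (snd Xa (q2 \<otimes>\<^bsub>G\<^esub> q1)) (amult A q2 q1 (fst Xa))"
  using assms unfolding eqv_obj_iff chom_def by blast+

lemma F0_obj: assumes "CGobj Xa" shows "F0 Xa \<in> cobj D"
proof -
  note P = CG_parts[OF assms]
  show ?thesis unfolding D_obj_iff eqv_obj_iff F0_def fst_conv snd_conv
  proof (intro conjI ballI)
    show "fst Xa \<in> cobj C" by (rule P(1))
    show "restrict (snd Xa) N \<in> extensional N" by simp
    fix q assume q: "q \<in> N"
    show "restrict (snd Xa) N q \<in> chom C (aobj A q (fst Xa)) (fst Xa)"
      using P(3)[of q] q unfolding chom_def by simp
    show "is_iso C (restrict (snd Xa) N q)" using P(3)[of q] q by simp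
  next
    show "restrict (snd Xa) N \<one>\<^bsub>G\<^esub> = aunit A (fst Xa)" using P(4) by simp
  next
    fix q2 q1 assume q: "q2 \<in> N" "q1 \<in> N"
    show "ccomp C (restrict (snd Xa) N q2) (amor A q2 (restrict (snd Xa) N q1)) =
          ccomp C (restrict (snd Xa) N (q2 \<otimes>\<^bsub>G\<^esub> q1)) (amult A q2 q1 (fst Xa))"
      using P(5)[of q2 q1] q by simp
  qed
qed

lemma F0_fst[simp]: "fst (F0 Xa) = fst Xa" by (simp add: F0_def)
lemma F0_snd[simp]: "n \<in> N \<Longrightarrow> snd (F0 Xa) n = snd Xa n" by (simp add: F0_def)

lemma key:
  assumes Xa: "CGobj Xa" and q1: "q1 \<in> carrier G" and q2: "q2 \<in> carrier G" and eq: "\<pi> q1 = \<pi> q2"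
  shows "ccomp C (ccomp C (snd Xa q1) (cinv C (cg q1 (F0 Xa)))) (cg q2 (F0 Xa)) = snd Xa q2"
proof -
  interpret G: group G by (rule grpG)
  interpret H: group G'' by (rule grpH)
  note P = CG_parts[OF Xa]
  define U where "U = F0 Xa"
  define Z where "Z = fst Xa"
  define \<alpha> where "\<alpha> = snd Xa"
  have U: "U \<in> cobj D" using F0_obj[OF Xa] U_def by simp
  have fU[simp]: "fst U = Z" by (simp add: U_def Z_def)
  have sU: "\<And>n. n \<in> N \<Longrightarrow> snd U n = \<alpha> n" by (simp add: U_def \<alpha>_def)
  have Z[simp]: "Z \<in> cobj C" using P(1) Z_def by simp
  have \<alpha>c[simp]: "\<And>q. q \<in> carrier G \<Longrightarrow> \<alpha> q \<in> carr C"
    and \<alpha>d[simp]: "\<And>q. q \<in> carrier G \<Longrightarrow> cdom C (\<alpha> q) = aobj A q Z"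
    and \<alpha>cd[simp]: "\<And>q. q \<in> carrier G \<Longrightarrow> ccod C (\<alpha> q) = Z"
    and \<alpha>i[simp]: "\<And>q. q \<in> carrier G \<Longrightarrow> is_iso C (\<alpha> q)"
    using P(3) by (simp_all add: \<alpha>_def Z_def)
  have \<alpha>co: "\<And>q2 q1. q2 \<in> carrier G \<Longrightarrow> q1 \<in> carrier G \<Longrightarrow>
       ccomp C (\<alpha> q2) (amor A q2 (\<alpha> q1)) = ccomp C (\<alpha> (q2 \<otimes>\<^bsub>G\<^esub> q1)) (amult A q2 q1 Z)"
    using P(5) by (simp add: \<alpha>_def Z_def)
  define n where "n = q2 \<otimes>\<^bsub>G\<^esub> inv\<^bsub>G\<^esub> q1"
  have nc: "n \<in> carrier G" using q1 q2 n_def by simp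
  have pn: "\<pi> n = \<one>\<^bsub>G''\<^esub>"
  proof -
    have "\<pi> n = \<pi> q2 \<otimes>\<^bsub>G''\<^esub> inv\<^bsub>G''\<^esub> (\<pi> q1)"
      using q1 q2 n_def group_hom.hom_inv[OF gh] by simp
    also have "\<dots> = \<one>\<^bsub>G''\<^esub>" using eq q2 by simp
    finally show ?thesis .
  qed
  have n: "n \<in> N" using nc pn N_iff by simp
  have nq[simp]: "n \<otimes>\<^bsub>G\<^esub> q1 = q2" using q1 q2 n_def by (simp add: G.m_assoc)
  define k where "k = inv\<^bsub>G\<^esub> q1 \<otimes>\<^bsub>G\<^esub> n \<otimes>\<^bsub>G\<^esub> q1"
  have k: "k \<in> N" using conj_N[OF q1 n] k_def by simp
  have kc[simp]: "k \<in> carrier G" using k by simp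
  have qk[simp]: "q1 \<otimes>\<^bsub>G\<^esub> k = q2"
    unfolding k_def using q1 nc q2 by (simp add: G.m_assoc[symmetric])
  have pq1: "\<pi> q1 \<in> carrier G''" using q1 by simp
  define Y where "Y = aobj B (\<pi> q1) U"
  have Y: "Y \<in> cobj D" using Bobj_D[OF pq1 U] Y_def by simp
  have a: "ccomp C (cg q2 U) (amult A n q1 Z) = ccomp C (uB Y) (ccomp C (cg n Y) (amor A n (cg q1 U)))"
    using gam_cocycle[OF nc q1 U] pn B_unit_law[OF pq1 U] by (simp add: Y_def)
  have b: "ccomp C (uB Y) (cg n Y) = snd Y n" by (rule gam_triv[OF n Y])
  have c: "ccomp C (snd Y n) (amor A n (cg q1 U)) = ccomp C (cg q1 U) (snd (canon_obj G N C A q1 U) n)"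
    using Dcarr_compat[OF gam_carr[OF q1 U] n] q1 U by (simp add: Y_def)
  have d: "snd (canon_obj G N C A q1 U) n = ccomp C (amor A q1 (\<alpha> k)) (ccomp C (cinv C (amult A q1 k Z)) (amult A n q1 Z))"
    using canon_snd[OF n, of q1 U] sU[OF k] by (simp add: k_def)
  have Yn: "snd Y n \<in> carr C" "cdom C (snd Y n) = aobj A n (fst Y)" "ccod C (snd Y n) = fst Y"
    using Dobj_snd[OF Y n] by auto
  have e: "ccomp C (cg q2 U) (amult A n q1 Z) =
      ccomp C (ccomp C (ccomp C (cg q1 U) (amor A q1 (\<alpha> k))) (cinv C (amult A q1 k Z))) (amult A n q1 Z)"
  proof -
    have "ccomp C (cg q2 U) (amult A n q1 Z) = ccomp C (ccomp C (uB Y) (cg n Y)) (amor A n (cg q1 U))"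
      using a Y U q1 nc pn by (simp add: Y_def)
    also have "\<dots> = ccomp C (cg q1 U) (snd (canon_obj G N C A q1 U) n)" using b c by simp
    also have "\<dots> = ccomp C (ccomp C (ccomp C (cg q1 U) (amor A q1 (\<alpha> k))) (cinv C (amult A q1 k Z))) (amult A n q1 Z)"
      using d q1 U nc by simp
    finally show ?thesis .
  qed
  have f: "cg q2 U = ccomp C (ccomp C (cg q1 U) (amor A q1 (\<alpha> k))) (cinv C (amult A q1 k Z))"
    by (rule CG.cancel_right[OF _ _ _ _ _ e]) (use q1 q2 U nc in simp_all)
  have "ccomp C (ccomp C (\<alpha> q1) (cinv C (cg q1 U))) (cg q2 U) =
        ccomp C (ccomp C (\<alpha> q1) (amor A q1 (\<alpha> k))) (cinv C (amult A q1 k Z))"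
    unfolding f using q1 U by simp
  also have "\<dots> = \<alpha> q2" using \<alpha>co[OF q1 kc] q1 q2 by simp
  finally show ?thesis by (simp add: U_def \<alpha>_def)
qed

end

context main_setup begin

definition betaF where
  "betaF Xa h = (aobj B h (F0 Xa), F0 Xa, ccomp C (snd Xa (sec h)) (cinv C (cg (sec h) (F0 Xa))))"

definition Fo where
  "Fo Xa = (F0 Xa, restrict (betaF Xa) (carrier G''))"

lemma ginv_carr:
  assumes q: "q \<in> carrier G" and U: "U \<in> cobj D"
  shows "(aobj B (\<pi> q) U, canon_obj G N C A q U, cinv C (cg q U)) \<in> carr D"
proof -
  obtain g where g: "cinverse D (\<gamma> q U) g" using gam_hom[OF q U] unfolding is_iso_def by blast
  have g': "g \<in> carr D \<and> cdom D g = ccod D (\<gamma> q U) \<and> ccod D g = cdom D (\<gamma> q U) \<and>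
     ccomp D g (\<gamma> q U) = cid D (cdom D (\<gamma> q U)) \<and> ccomp D (\<gamma> q U) g = cid D (ccod D (\<gamma> q U))"
    using g unfolding cinverse_def by blast
  have gc: "g \<in> carr D" using g' by blast
  have gd: "fst g = aobj B (\<pi> q) U" and gcd: "fst (snd g) = canon_obj G N C A q U"
    using g' q U by (simp_all only: eqv_cat_simps gam_fst gam_fst2)
  have l: "ccomp C (snd (snd g)) (cg q U) = cid C (aobj A q (fst U))"
    and r: "ccomp C (cg q U) (snd (snd g)) = cid C (fst (aobj B (\<pi> q) U))"
    using g' q U by (simp_all add: gam_fst gam_fst2)
  have "cinverse C (cg q U) (snd (snd g))"
    using Dcarr_C[OF gc] gd gcd l r q U unfolding cinverse_def by (simp add: gam_fst gam_fst2)
  then have "cinv C (cg q U) = snd (snd g)" by (rule CG.cinv_eq)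
  then have "g = (aobj B (\<pi> q) U, canon_obj G N C A q U, cinv C (cg q U))"
    using gd gcd by (cases g) auto
  then show ?thesis using gc by simp
qed

lemma t_carr:
  assumes Xa: "CGobj Xa" and q: "q \<in> carrier G"
  shows "(canon_obj G N C A q (F0 Xa), F0 Xa, snd Xa q) \<in> carr D"
proof -
  interpret G: group G by (rule grpG)
  note P = CG_parts[OF Xa]
  have U: "F0 Xa \<in> cobj D" by (rule F0_obj[OF Xa])
  have cU: "canon_obj G N C A q (F0 Xa) \<in> cobj D" by (rule canon_obj_D[OF q U])
  have "ccomp C (snd (F0 Xa) n) (amor A n (snd Xa q)) = ccomp C (snd Xa q) (snd (canon_obj G N C A q (F0 Xa)) n)"
    if n: "n \<in> N" for n
  proof -
    define k where "k = inv\<^bsub>G\<^esub> q \<otimes>\<^bsub>G\<^esub> n \<otimes>\<^bsub>G\<^esub> q"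
    have k: "k \<in> N" using conj_N[OF q n] k_def by simp
    have nc: "n \<in> carrier G" using n by simp
    have qk: "q \<otimes>\<^bsub>G\<^esub> k = n \<otimes>\<^bsub>G\<^esub> q"
      unfolding k_def using q nc by (simp add: G.m_assoc[symmetric])
    have kc: "k \<in> carrier G" using k by simp
    have "ccomp C (snd Xa q) (snd (canon_obj G N C A q (F0 Xa)) n) =
       ccomp C (ccomp C (ccomp C (snd Xa q) (amor A q (snd Xa k))) (cinv C (amult A q k (fst Xa)))) (amult A n q (fst Xa))"
      using canon_snd[OF n, of q "F0 Xa", folded k_def] k kc qk q nc P(1) P(3)[of q] P(3)[of k] by simp
    also have "\<dots> = ccomp C (ccomp C (ccomp C (snd Xa (q \<otimes>\<^bsub>G\<^esub> k)) (amult A q k (fst Xa))) (cinv C (amult A q k (fst Xa)))) (amult A n q (fst Xa))"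
      using P(5)[of q k] q k by simp
    also have "\<dots> = ccomp C (snd Xa (n \<otimes>\<^bsub>G\<^esub> q)) (amult A n q (fst Xa))"
      using qk q nc k P(1) P(3)[of "n \<otimes>\<^bsub>G\<^esub> q"] by simp
    also have "\<dots> = ccomp C (snd (F0 Xa) n) (amor A n (snd Xa q))"
      using P(5)[of n q] n q by simp
    finally show ?thesis by simp
  qed
  then show ?thesis using U cU P(3)[of q] q unfolding eqv_carr_iff chom_def by simp
qed

lemma betaF_carr:
  assumes Xa: "CGobj Xa" and h: "h \<in> carrier G''"
  shows "betaF Xa h \<in> chom D (aobj B h (F0 Xa)) (F0 Xa) \<and> is_iso D (betaF Xa h)"
proof -
  note P = CG_parts[OF Xa]
  have U: "F0 Xa \<in> cobj D" by (rule F0_obj[OF Xa])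
  define q where "q = sec h"
  have q: "q \<in> carrier G" "\<pi> q = h" using h q_def by simp_all
  have g: "(aobj B h (F0 Xa), canon_obj G N C A q (F0 Xa), cinv C (cg q (F0 Xa))) \<in> carr D"
    using ginv_carr[OF q(1) U] q(2) by simp
  have t: "(canon_obj G N C A q (F0 Xa), F0 Xa, snd Xa q) \<in> carr D" by (rule t_carr[OF Xa q(1)])
  have "ccomp D (canon_obj G N C A q (F0 Xa), F0 Xa, snd Xa q) (aobj B h (F0 Xa), canon_obj G N C A q (F0 Xa), cinv C (cg q (F0 Xa))) \<in> carr D"
    using DB.comp_carr[OF g t] by simp
  then have bc: "betaF Xa h \<in> carr D" by (simp add: betaF_def q_def)
  have "is_iso C (snd (snd (betaF Xa h)))"
    using q U P(3)[of q] by (simp add: betaF_def q_def[symmetric] CG.iso_comp CG.iso_cinv)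
  then have "is_iso D (betaF Xa h)" using CN.C_iso_E bc by blast
  then show ?thesis using bc unfolding chom_def by (simp add: betaF_def)
qed

lemma betaF_cg:
  assumes Xa: "CGobj Xa" and q: "q \<in> carrier G"
  shows "ccomp C (snd (snd (betaF Xa (\<pi> q)))) (cg q (F0 Xa)) = snd Xa q"
proof -
  have h: "\<pi> q \<in> carrier G''" using q by simp
  show ?thesis unfolding betaF_def snd_conv
    by (rule key[OF Xa sec_carr[OF h] q]) (simp add: h)
qed

end

context main_setup begin

abbreviation "bF Xa h \<equiv> snd (snd (betaF Xa h))"

lemma betaF_fst[simp]: "fst (betaF Xa h) = aobj B h (F0 Xa)"
  and betaF_fst2[simp]: "fst (snd (betaF Xa h)) = F0 Xa"
  by (simp_all add: betaF_def)

lemma betaF_D[simp]: "CGobj Xa \<Longrightarrow> h \<in> carrier G'' \<Longrightarrow> betaF Xa h \<in> carr D"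
  using betaF_carr unfolding chom_def by blast

lemma bF_carr[simp]: "CGobj Xa \<Longrightarrow> h \<in> carrier G'' \<Longrightarrow> bF Xa h \<in> carr C"
  and bF_dom[simp]: "CGobj Xa \<Longrightarrow> h \<in> carrier G'' \<Longrightarrow> cdom C (bF Xa h) = fst (aobj B h (F0 Xa))"
  and bF_cod[simp]: "CGobj Xa \<Longrightarrow> h \<in> carrier G'' \<Longrightarrow> ccod C (bF Xa h) = fst Xa"
  using Dcarr_C[OF betaF_D, of Xa h] by simp_all

lemma amor_iso: assumes q: "q \<in> carrier G" and f: "is_iso C f" shows "is_iso C (amor A q f)"
proof -
  have fc: "f \<in> carr C" using f by (rule CG.iso_carr)
  have 1: "ccomp C (amor A q (cinv C f)) (amor A q f) = amor A q (ccomp C (cinv C f) f)"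
    using q f fc by (simp del: CG.cinv_l CG.cinv_r)
  have 2: "ccomp C (amor A q f) (amor A q (cinv C f)) = amor A q (ccomp C f (cinv C f))"
    using q f fc by (simp del: CG.cinv_l CG.cinv_r)
  have "cinverse C (amor A q f) (amor A q (cinv C f))"
    unfolding cinverse_def using q f fc 1 2 by simp
  then show ?thesis unfolding is_iso_def by (rule exI)
qed

lemma Fo_obj:
  assumes Xa: "CGobj Xa"
  shows "eqv_obj G'' (carrier G'') D B (Fo Xa)"
proof -
  interpret G: group G by (rule grpG)
  interpret H: group G'' by (rule grpH)
  note P = CG_parts[OF Xa]
  define U where "U = F0 Xa"
  have U: "U \<in> cobj D" using F0_obj[OF Xa] U_def by simp
  have fU[simp]: "fst U = fst Xa" by (simp add: U_def)
  have Ud[simp]: "F0 Xa = U" by (simp add: U_def)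
  have unit: "betaF Xa \<one>\<^bsub>G''\<^esub> = aunit B U"
  proof -
    have i1: "betaF Xa \<one>\<^bsub>G''\<^esub> \<in> chom D (aobj B \<one>\<^bsub>G''\<^esub> U) U" using betaF_carr[OF Xa] by simp
    have i2: "aunit B U \<in> chom D (aobj B \<one>\<^bsub>G''\<^esub> U) U" by (rule Bu_hom[OF U])
    have e: "ccomp C (bF Xa \<one>\<^bsub>G''\<^esub>) (cg \<one>\<^bsub>G\<^esub> U) = ccomp C (uB U) (cg \<one>\<^bsub>G\<^esub> U)"
      using betaF_cg[OF Xa, of "\<one>\<^bsub>G\<^esub>"] gam_unit[OF U] P(4) by simp
    have "bF Xa \<one>\<^bsub>G''\<^esub> = uB U"
      by (rule CG.cancel_right[OF _ _ _ _ _ e]) (use Xa U in \<open>simp_all\<close>)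
    then show ?thesis using CN.E_hom_eq[OF i1 i2] by simp
  qed
  have coc: "ccomp D (betaF Xa h2) (amor B h2 (betaF Xa h1)) = ccomp D (betaF Xa (h2 \<otimes>\<^bsub>G''\<^esub> h1)) (amult B h2 h1 U)"
    if h: "h2 \<in> carrier G''" "h1 \<in> carrier G''" for h2 h1
  proof -
    define q1 where "q1 = sec h1"
    define q2 where "q2 = sec h2"
    have q: "q1 \<in> carrier G" "q2 \<in> carrier G" "\<pi> q1 = h1" "\<pi> q2 = h2" using h q1_def q2_def by simp_all
    define V where "V = aobj B h1 U"
    have V: "V \<in> cobj D" using Bobj_D[OF h(2) U] V_def by simp
    have Vd[simp]: "aobj B h1 U = V" using V_def by simp
    have b1: "betaF Xa h1 \<in> chom D (aobj B h1 U) U" "betaF Xa h2 \<in> chom D (aobj B h2 U) U"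
      "betaF Xa (h2 \<otimes>\<^bsub>G''\<^esub> h1) \<in> chom D (aobj B (h2 \<otimes>\<^bsub>G''\<^esub> h1) U) U"
      using betaF_carr[OF Xa, of h1] betaF_carr[OF Xa, of h2] betaF_carr[OF Xa, of "h2 \<otimes>\<^bsub>G''\<^esub> h1"] h by simp_all
    have l1: "amor B h2 (betaF Xa h1) \<in> chom D (aobj B h2 (aobj B h1 U)) (aobj B h2 U)"
      using DB.amor_carr[of h2 "betaF Xa h1"] DB.amor_dom[of h2 "betaF Xa h1"] DB.amor_cod[of h2 "betaF Xa h1"] b1(1) h
      unfolding chom_def by simp
    have L: "ccomp D (betaF Xa h2) (amor B h2 (betaF Xa h1)) \<in> chom D (aobj B h2 (aobj B h1 U)) U"
      using DB.comp_hom[OF l1 b1(2)] by simp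
    have R: "ccomp D (betaF Xa (h2 \<otimes>\<^bsub>G''\<^esub> h1)) (amult B h2 h1 U) \<in> chom D (aobj B h2 (aobj B h1 U)) U"
      using DB.comp_hom[OF conjunct1[OF Bm_hom[OF h(1,2) U]] b1(3)] by simp
    define i where "i = ccomp C (cg q2 V) (amor A q2 (cg q1 U))"
    have ii: "is_iso C i" "i \<in> carr C" "ccod C i = fst (aobj B h2 V)"
      using q U V unfolding i_def by (simp_all add: CG.iso_comp CG.iso_carr amor_iso)
    have f1: "betaF Xa h1 \<in> carr D" "fst (betaF Xa h1) = V" "fst (snd (betaF Xa h1)) = U"
      using Xa h by simp_all
    have nat: "ccomp C (cg q2 U) (amor A q2 (bF Xa h1)) = ccomp C (bm h2 (betaF Xa h1)) (cg q2 V)"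
      using gam_natural[OF q(2) f1(1)] f1 q by simp
    have bc1: "ccomp C (bF Xa h1) (cg q1 U) = snd Xa q1" using betaF_cg[OF Xa q(1)] q by simp
    have bc2: "ccomp C (bF Xa h2) (cg q2 U) = snd Xa q2" using betaF_cg[OF Xa q(2)] q by simp
    have bc3: "ccomp C (bF Xa (h2 \<otimes>\<^bsub>G''\<^esub> h1)) (cg (q2 \<otimes>\<^bsub>G\<^esub> q1) U) = snd Xa (q2 \<otimes>\<^bsub>G\<^esub> q1)"
      using betaF_cg[OF Xa G.m_closed[OF q(2,1)]] q by simp
    have gcoc: "ccomp C (cg (q2 \<otimes>\<^bsub>G\<^esub> q1) U) (amult A q2 q1 (fst Xa)) =
       ccomp C (mB h2 h1 U) (ccomp C (cg q2 V) (amor A q2 (cg q1 U)))"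
      using gam_cocycle[OF q(2,1) U] q by simp
    have hh: "h2 \<otimes>\<^bsub>G''\<^esub> h1 \<in> carrier G''" using h by simp
    have eL: "ccomp C (ccomp C (bF Xa h2) (bm h2 (betaF Xa h1))) i = ccomp C (snd Xa (q2 \<otimes>\<^bsub>G\<^esub> q1)) (amult A q2 q1 (fst Xa))"
    proof -
      have "ccomp C (ccomp C (bF Xa h2) (bm h2 (betaF Xa h1))) i =
            ccomp C (ccomp C (bF Xa h2) (ccomp C (bm h2 (betaF Xa h1)) (cg q2 V))) (amor A q2 (cg q1 U))"
        unfolding i_def using Xa h q U V f1 by simp
      also have "\<dots> = ccomp C (ccomp C (bF Xa h2) (ccomp C (cg q2 U) (amor A q2 (bF Xa h1)))) (amor A q2 (cg q1 U))"
        by (simp only: nat)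
      also have "\<dots> = ccomp C (ccomp C (bF Xa h2) (cg q2 U)) (amor A q2 (ccomp C (bF Xa h1) (cg q1 U)))"
        using Xa h q U V f1 by simp
      also have "\<dots> = ccomp C (snd Xa q2) (amor A q2 (snd Xa q1))" by (simp only: bc1 bc2)
      also have "\<dots> = ccomp C (snd Xa (q2 \<otimes>\<^bsub>G\<^esub> q1)) (amult A q2 q1 (fst Xa))" using P(5) q by simp
      finally show ?thesis .
    qed
    have eR: "ccomp C (ccomp C (bF Xa (h2 \<otimes>\<^bsub>G''\<^esub> h1)) (mB h2 h1 U)) i = ccomp C (snd Xa (q2 \<otimes>\<^bsub>G\<^esub> q1)) (amult A q2 q1 (fst Xa))"
    proof -
      have "ccomp C (ccomp C (bF Xa (h2 \<otimes>\<^bsub>G''\<^esub> h1)) (mB h2 h1 U)) i =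
            ccomp C (bF Xa (h2 \<otimes>\<^bsub>G''\<^esub> h1)) (ccomp C (mB h2 h1 U) (ccomp C (cg q2 V) (amor A q2 (cg q1 U))))"
        unfolding i_def using Xa h hh q U V by simp
      also have "\<dots> = ccomp C (bF Xa (h2 \<otimes>\<^bsub>G''\<^esub> h1)) (ccomp C (cg (q2 \<otimes>\<^bsub>G\<^esub> q1) U) (amult A q2 q1 (fst Xa)))"
        by (simp only: gcoc)
      also have "\<dots> = ccomp C (ccomp C (bF Xa (h2 \<otimes>\<^bsub>G''\<^esub> h1)) (cg (q2 \<otimes>\<^bsub>G\<^esub> q1) U)) (amult A q2 q1 (fst Xa))"
        using Xa h hh q U G.m_closed[OF q(2,1)] P(1) by simp
      also have "\<dots> = ccomp C (snd Xa (q2 \<otimes>\<^bsub>G\<^esub> q1)) (amult A q2 q1 (fst Xa))" by (simp only: bc3)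
      finally show ?thesis .
    qed
    have "ccomp C (bF Xa h2) (bm h2 (betaF Xa h1)) = ccomp C (bF Xa (h2 \<otimes>\<^bsub>G''\<^esub> h1)) (mB h2 h1 U)"
      by (rule CG.cancel_right[OF ii(1) _ _ _ _ eL[unfolded eR[symmetric]]])
         (use Xa h hh ii f1 U in \<open>simp_all\<close>)
    then show ?thesis using CN.E_hom_eq[OF L R] by simp
  qed
  show ?thesis unfolding eqv_obj_iff Fo_def fst_conv snd_conv
  proof (intro conjI ballI)
    show "F0 Xa \<in> cobj D" by (rule F0_obj[OF Xa])
    show "restrict (betaF Xa) (carrier G'') \<in> extensional (carrier G'')" by simp
    fix h assume h: "h \<in> carrier G''"
    show "restrict (betaF Xa) (carrier G'') h \<in> chom D (aobj B h (F0 Xa)) (F0 Xa)"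
      "is_iso D (restrict (betaF Xa) (carrier G'') h)" using betaF_carr[OF Xa h] h by simp_all
  next
    show "restrict (betaF Xa) (carrier G'') \<one>\<^bsub>G''\<^esub> = aunit B (F0 Xa)" using unit by simp
  next
    fix h2 h1 assume h: "h2 \<in> carrier G''" "h1 \<in> carrier G''"
    show "ccomp D (restrict (betaF Xa) (carrier G'') h2) (amor B h2 (restrict (betaF Xa) (carrier G'') h1)) =
        ccomp D (restrict (betaF Xa) (carrier G'') (h2 \<otimes>\<^bsub>G''\<^esub> h1)) (amult B h2 h1 (F0 Xa))"
      using coc[OF h] h by simp
  qed
qed

end

context main_setup begin

definition Go where
  "Go Xb = (fst (fst Xb), restrict (\<lambda>q. ccomp C (snd (snd (snd Xb (\<pi> q)))) (cg q (fst Xb))) (carrier G))"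

abbreviation "DBobj Xb \<equiv> eqv_obj G'' (carrier G'') D B Xb"

lemma DB_parts:
  assumes "DBobj Xb"
  shows "fst Xb \<in> cobj D" "snd Xb \<in> extensional (carrier G'')"
    "\<And>h. h \<in> carrier G'' \<Longrightarrow> snd Xb h \<in> chom D (aobj B h (fst Xb)) (fst Xb) \<and> is_iso D (snd Xb h)"
    "snd Xb \<one>\<^bsub>G''\<^esub> = aunit B (fst Xb)"
    "\<And>h2 h1. h2 \<in> carrier G'' \<Longrightarrow> h1 \<in> carrier G'' \<Longrightarrow>
       ccomp D (snd Xb h2) (amor B h2 (snd Xb h1)) = ccomp D (snd Xb (h2 \<otimes>\<^bsub>G''\<^esub> h1)) (amult B h2 h1 (fst Xb))"
  using assms unfolding eqv_obj_iff by blast+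

abbreviation "bX Xb h \<equiv> snd (snd (snd Xb h))"

lemma bX_props:
  assumes Xb: "DBobj Xb" and h: "h \<in> carrier G''"
  shows "bX Xb h \<in> carr C" "cdom C (bX Xb h) = fst (aobj B h (fst Xb))" "ccod C (bX Xb h) = fst (fst Xb)"
    "is_iso C (bX Xb h)" "snd Xb h \<in> carr D" "fst (snd Xb h) = aobj B h (fst Xb)" "fst (snd (snd Xb h)) = fst Xb"
proof -
  note P = DB_parts[OF Xb]
  have a: "snd Xb h \<in> chom D (aobj B h (fst Xb)) (fst Xb)" "is_iso D (snd Xb h)" using P(3)[OF h] by blast+
  then show "snd Xb h \<in> carr D" "fst (snd Xb h) = aobj B h (fst Xb)" "fst (snd (snd Xb h)) = fst Xb"
    unfolding chom_def by simp_all
  then show "bX Xb h \<in> carr C" "cdom C (bX Xb h) = fst (aobj B h (fst Xb))" "ccod C (bX Xb h) = fst (fst Xb)"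
    using Dcarr_C[of "snd Xb h"] by simp_all
  show "is_iso C (bX Xb h)" using CN.E_iso_C a(2) by blast
qed

lemma Go_obj:
  assumes Xb: "DBobj Xb"
  shows "CGobj (Go Xb)"
proof -
  interpret G: group G by (rule grpG)
  note P = DB_parts[OF Xb]
  define U where "U = fst Xb"
  have U: "U \<in> cobj D" using P(1) U_def by simp
  note bp = bX_props[OF Xb, folded U_def]
  have bX1: "bX Xb \<one>\<^bsub>G''\<^esub> = uB U" using P(4) U_def by simp
  have coc: "ccomp C (bX Xb h2) (bm h2 (snd Xb h1)) = ccomp C (bX Xb (h2 \<otimes>\<^bsub>G''\<^esub> h1)) (mB h2 h1 U)"
    if h: "h2 \<in> carrier G''" "h1 \<in> carrier G''" for h2 h1
    using P(5)[OF h] U_def by simp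
  have al: "ccomp C (bX Xb (\<pi> q)) (cg q U) \<in> carr C \<and> cdom C (ccomp C (bX Xb (\<pi> q)) (cg q U)) = aobj A q (fst U)
     \<and> ccod C (ccomp C (bX Xb (\<pi> q)) (cg q U)) = fst U \<and> is_iso C (ccomp C (bX Xb (\<pi> q)) (cg q U))"
    if q: "q \<in> carrier G" for q
    using q U bp[of "\<pi> q"] by (simp add: CG.iso_comp)
  have cocy: "ccomp C (ccomp C (bX Xb (\<pi> q2)) (cg q2 U)) (amor A q2 (ccomp C (bX Xb (\<pi> q1)) (cg q1 U))) =
     ccomp C (ccomp C (bX Xb (\<pi> (q2 \<otimes>\<^bsub>G\<^esub> q1))) (cg (q2 \<otimes>\<^bsub>G\<^esub> q1) U)) (amult A q2 q1 (fst U))"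
    if q: "q2 \<in> carrier G" "q1 \<in> carrier G" for q2 q1
  proof -
    define h1 where "h1 = \<pi> q1"
    define h2 where "h2 = \<pi> q2"
    have h: "h2 \<in> carrier G''" "h1 \<in> carrier G''" using q h1_def h2_def by simp_all
    define V where "V = aobj B h1 U"
    have V: "V \<in> cobj D" using Bobj_D[OF h(2) U] V_def by simp
    have Vd[simp]: "aobj B h1 U = V" using V_def by simp
    have b1: "snd Xb h1 \<in> carr D" "fst (snd Xb h1) = V" "fst (snd (snd Xb h1)) = U"
      using bp(5-7)[OF h(2)] by simp_all
    have nat: "ccomp C (cg q2 U) (amor A q2 (bX Xb h1)) = ccomp C (bm h2 (snd Xb h1)) (cg q2 V)"
      using gam_natural[OF q(1) b1(1)] b1 h2_def[symmetric] by simp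
    have gcoc: "ccomp C (cg (q2 \<otimes>\<^bsub>G\<^esub> q1) U) (amult A q2 q1 (fst U)) =
       ccomp C (mB h2 h1 U) (ccomp C (cg q2 V) (amor A q2 (cg q1 U)))"
      using gam_cocycle[OF q U] h1_def[symmetric] h2_def[symmetric] by simp
    have pq: "\<pi> (q2 \<otimes>\<^bsub>G\<^esub> q1) = h2 \<otimes>\<^bsub>G''\<^esub> h1" using q h1_def[symmetric] h2_def[symmetric] by simp
    have hh: "h2 \<otimes>\<^bsub>G''\<^esub> h1 \<in> carrier G''" using h grpH by (simp add: group.is_monoid monoid.m_closed)
    have qq: "q2 \<otimes>\<^bsub>G\<^esub> q1 \<in> carrier G" using q by simp
    note facts = q h hh qq U V h1_def[symmetric] h2_def[symmetric] b1 bp(1-4)[OF h(1)] bp(1-4)[OF h(2)] bp(1-4)[OF hh]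
    have "ccomp C (ccomp C (bX Xb h2) (cg q2 U)) (amor A q2 (ccomp C (bX Xb h1) (cg q1 U))) =
          ccomp C (ccomp C (bX Xb h2) (ccomp C (cg q2 U) (amor A q2 (bX Xb h1)))) (amor A q2 (cg q1 U))"
      using facts by simp
    also have "\<dots> = ccomp C (ccomp C (bX Xb h2) (ccomp C (bm h2 (snd Xb h1)) (cg q2 V))) (amor A q2 (cg q1 U))"
      by (simp only: nat)
    also have "\<dots> = ccomp C (ccomp C (ccomp C (bX Xb h2) (bm h2 (snd Xb h1))) (cg q2 V)) (amor A q2 (cg q1 U))"
      using facts by simp
    also have "\<dots> = ccomp C (ccomp C (ccomp C (bX Xb (h2 \<otimes>\<^bsub>G''\<^esub> h1)) (mB h2 h1 U)) (cg q2 V)) (amor A q2 (cg q1 U))"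
      by (simp only: coc[OF h])
    also have "\<dots> = ccomp C (bX Xb (h2 \<otimes>\<^bsub>G''\<^esub> h1)) (ccomp C (mB h2 h1 U) (ccomp C (cg q2 V) (amor A q2 (cg q1 U))))"
      using facts by simp
    also have "\<dots> = ccomp C (bX Xb (h2 \<otimes>\<^bsub>G''\<^esub> h1)) (ccomp C (cg (q2 \<otimes>\<^bsub>G\<^esub> q1) U) (amult A q2 q1 (fst U)))"
      by (simp only: gcoc)
    also have "\<dots> = ccomp C (ccomp C (bX Xb (h2 \<otimes>\<^bsub>G''\<^esub> h1)) (cg (q2 \<otimes>\<^bsub>G\<^esub> q1) U)) (amult A q2 q1 (fst U))"
      using facts pq by simp
    finally show ?thesis using h1_def[symmetric] h2_def[symmetric] pq by simp
  qed
  show ?thesis unfolding eqv_obj_iff Go_def fst_conv snd_conv U_def[symmetric]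
  proof (intro conjI ballI)
    show "fst U \<in> cobj C" using U by simp
    show "restrict (\<lambda>q. ccomp C (bX Xb (\<pi> q)) (cg q U)) (carrier G) \<in> extensional (carrier G)" by simp
    fix q assume q: "q \<in> carrier G"
    show "restrict (\<lambda>q. ccomp C (bX Xb (\<pi> q)) (cg q U)) (carrier G) q \<in> chom C (aobj A q (fst U)) (fst U)"
      "is_iso C (restrict (\<lambda>q. ccomp C (bX Xb (\<pi> q)) (cg q U)) (carrier G) q)"
      using al[OF q] q unfolding chom_def by simp_all
  next
    show "restrict (\<lambda>q. ccomp C (bX Xb (\<pi> q)) (cg q U)) (carrier G) \<one>\<^bsub>G\<^esub> = aunit A (fst U)"
      using bX1 gam_unit[OF U] by simp
  next
    fix q2 q1 assume q: "q2 \<in> carrier G" "q1 \<in> carrier G"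
    show "ccomp C (restrict (\<lambda>q. ccomp C (bX Xb (\<pi> q)) (cg q U)) (carrier G) q2)
           (amor A q2 (restrict (\<lambda>q. ccomp C (bX Xb (\<pi> q)) (cg q U)) (carrier G) q1)) =
          ccomp C (restrict (\<lambda>q. ccomp C (bX Xb (\<pi> q)) (cg q U)) (carrier G) (q2 \<otimes>\<^bsub>G\<^esub> q1)) (amult A q2 q1 (fst U))"
      using cocy[OF q] q by simp
  qed
qed

end

context main_setup begin

lemma GF: assumes Xa: "CGobj Xa" shows "Go (Fo Xa) = Xa"
proof -
  note P = CG_parts[OF Xa]
  have "restrict (\<lambda>q. ccomp C (snd (snd (snd (Fo Xa) (\<pi> q)))) (cg q (fst (Fo Xa)))) (carrier G) =
        restrict (snd Xa) (carrier G)"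
  proof (rule restrict_ext)
    fix q assume q: "q \<in> carrier G"
    show "ccomp C (snd (snd (snd (Fo Xa) (\<pi> q)))) (cg q (fst (Fo Xa))) = snd Xa q"
      using betaF_cg[OF Xa q] q by (simp add: Fo_def)
  qed
  also have "\<dots> = snd Xa" using P(2) by (rule extensional_restrict)
  finally show ?thesis unfolding Go_def by (simp add: Fo_def)
qed

lemma F0_Go: assumes Xb: "DBobj Xb" shows "F0 (Go Xb) = fst Xb"
proof -
  note P = DB_parts[OF Xb]
  define U where "U = fst Xb"
  have U: "U \<in> cobj D" using P(1) U_def by simp
  have "restrict (snd (Go Xb)) N = snd U"
  proof (rule extensionalityI)
    show "restrict (snd (Go Xb)) N \<in> extensional N" by simp
    show "snd U \<in> extensional N" using U unfolding D_obj_iff eqv_obj_iff by blast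
    fix n assume n: "n \<in> N"
    have "restrict (snd (Go Xb)) N n = ccomp C (bX Xb \<one>\<^bsub>G''\<^esub>) (cg n U)"
      using n N_iff[of n] by (simp add: Go_def U_def)
    also have "\<dots> = snd U n" using P(4) gam_triv[OF n U] by (simp add: U_def)
    finally show "restrict (snd (Go Xb)) N n = snd U n" .
  qed
  then show ?thesis by (simp add: F0_def Go_def U_def)
qed

lemma FG: assumes Xb: "DBobj Xb" shows "Fo (Go Xb) = Xb"
proof -
  note P = DB_parts[OF Xb]
  define U where "U = fst Xb"
  have U: "U \<in> cobj D" using P(1) U_def by simp
  have FG0: "F0 (Go Xb) = U" using F0_Go[OF Xb] U_def by simp
  have "restrict (betaF (Go Xb)) (carrier G'') = snd Xb"
  proof (rule extensionalityI)
    show "restrict (betaF (Go Xb)) (carrier G'') \<in> extensional (carrier G'')" by simp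
    show "snd Xb \<in> extensional (carrier G'')" by (rule P(2))
    fix h assume h: "h \<in> carrier G''"
    note bp = bX_props[OF Xb h, folded U_def]
    have s: "snd (Go Xb) (sec h) = ccomp C (bX Xb h) (cg (sec h) U)"
      using h by (simp add: Go_def U_def)
    have "betaF (Go Xb) h = (aobj B h U, U, ccomp C (ccomp C (bX Xb h) (cg (sec h) U)) (cinv C (cg (sec h) U)))"
      unfolding betaF_def FG0 s ..
    also have "\<dots> = (aobj B h U, U, bX Xb h)" using bp h U by simp
    also have "\<dots> = snd Xb h" using bp by (cases "snd Xb h") auto
    finally show "restrict (betaF (Go Xb)) (carrier G'') h = snd Xb h" using h by simp
  qed
  then show ?thesis unfolding Fo_def FG0 U_def by simp
qed

end

context main_setup begin

definition Fm where
  "Fm f = (Fo (fst f), Fo (fst (snd f)), (F0 (fst f), F0 (fst (snd f)), snd (snd f)))"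

definition Gm where
  "Gm f = (Go (fst f), Go (fst (snd f)), snd (snd (snd (snd f))))"

lemma Fm_carr: assumes f: "f \<in> carr CG.E" shows "Fm f \<in> carr DB.E"
proof -
  define Xa where "Xa = fst f"
  define Ya where "Ya = fst (snd f)"
  define \<phi> where "\<phi> = snd (snd f)"
  have Xa: "CGobj Xa" and Ya: "CGobj Ya" and ph: "\<phi> \<in> chom C (fst Xa) (fst Ya)"
    and comp: "\<And>q. q \<in> carrier G \<Longrightarrow> ccomp C (snd Ya q) (amor A q \<phi>) = ccomp C \<phi> (snd Xa q)"
    using f unfolding eqv_carr_iff Xa_def Ya_def \<phi>_def by blast+
  have phc: "\<phi> \<in> carr C" "cdom C \<phi> = fst Xa" "ccod C \<phi> = fst Ya" using ph unfolding chom_def by simp_all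
  note PX = CG_parts[OF Xa] and PY = CG_parts[OF Ya]
  define g where "g = (F0 Xa, F0 Ya, \<phi>)"
  have X: "F0 Xa \<in> cobj D" and Y: "F0 Ya \<in> cobj D" using F0_obj Xa Ya by blast+
  have g: "g \<in> carr D"
    unfolding g_def eqv_carr_iff fst_conv snd_conv
    using X Y phc comp unfolding chom_def by simp
  have gf: "fst g = F0 Xa" "fst (snd g) = F0 Ya" "snd (snd g) = \<phi>" by (simp_all add: g_def)
  have compat: "ccomp D (betaF Ya h) (amor B h g) = ccomp D g (betaF Xa h)" if h: "h \<in> carrier G''" for h
  proof -
    define q where "q = sec h"
    have q: "q \<in> carrier G" "\<pi> q = h" using h q_def by simp_all
    have l1: "amor B h g \<in> chom D (aobj B h (F0 Xa)) (aobj B h (F0 Ya))"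
      using DB.amor_carr[OF h g] DB.amor_dom[OF h g] DB.amor_cod[OF h g] gf unfolding chom_def by simp
    have L: "ccomp D (betaF Ya h) (amor B h g) \<in> chom D (aobj B h (F0 Xa)) (F0 Ya)"
      using DB.comp_hom[OF l1] betaF_carr[OF Ya h] by blast
    have g': "g \<in> chom D (F0 Xa) (F0 Ya)" using g gf unfolding chom_def by simp
    have R: "ccomp D g (betaF Xa h) \<in> chom D (aobj B h (F0 Xa)) (F0 Ya)"
      using DB.comp_hom[OF _ g'] betaF_carr[OF Xa h] by blast
    have nat: "ccomp C (cg q (F0 Ya)) (amor A q \<phi>) = ccomp C (bm h g) (cg q (F0 Xa))"
      using gam_natural[OF q(1) g] gf q by simp
    have b1: "ccomp C (bF Ya h) (cg q (F0 Ya)) = snd Ya q" using betaF_cg[OF Ya q(1)] q by simp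
    have b2: "ccomp C (bF Xa h) (cg q (F0 Xa)) = snd Xa q" using betaF_cg[OF Xa q(1)] q by simp
    note facts = h q X Y g gf phc PX(1) PY(1)
    have e: "ccomp C (ccomp C (bF Ya h) (bm h g)) (cg q (F0 Xa)) = ccomp C (ccomp C \<phi> (bF Xa h)) (cg q (F0 Xa))"
    proof -
      have "ccomp C (ccomp C (bF Ya h) (bm h g)) (cg q (F0 Xa)) = ccomp C (bF Ya h) (ccomp C (bm h g) (cg q (F0 Xa)))"
        using facts Ya by simp
      also have "\<dots> = ccomp C (bF Ya h) (ccomp C (cg q (F0 Ya)) (amor A q \<phi>))" by (simp only: nat)
      also have "\<dots> = ccomp C (ccomp C (bF Ya h) (cg q (F0 Ya))) (amor A q \<phi>)" using facts Ya by simp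
      also have "\<dots> = ccomp C \<phi> (snd Xa q)" using b1 comp[OF q(1)] by simp
      also have "\<dots> = ccomp C \<phi> (ccomp C (bF Xa h) (cg q (F0 Xa)))" using b2 by simp
      also have "\<dots> = ccomp C (ccomp C \<phi> (bF Xa h)) (cg q (F0 Xa))" using facts Xa by simp
      finally show ?thesis .
    qed
    have "ccomp C (bF Ya h) (bm h g) = ccomp C \<phi> (bF Xa h)"
      by (rule CG.cancel_right[OF _ _ _ _ _ e]) (use facts Xa Ya in simp_all)
    then show ?thesis using CN.E_hom_eq[OF L R] gf by simp
  qed
  show ?thesis
    unfolding eqv_carr_iff Fm_def fst_conv snd_conv Xa_def[symmetric] Ya_def[symmetric] \<phi>_def[symmetric] g_def[symmetric]
  proof (intro conjI ballI)
    show "DBobj (Fo Xa)" "DBobj (Fo Ya)" using Fo_obj Xa Ya by blast+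
    show "g \<in> chom D (fst (Fo Xa)) (fst (Fo Ya))" using g gf unfolding chom_def by (simp add: Fo_def)
    fix h assume h: "h \<in> carrier G''"
    show "ccomp D (snd (Fo Ya) h) (amor B h g) = ccomp D g (snd (Fo Xa) h)"
      using compat[OF h] h by (simp add: Fo_def del: eqv_cat_simps)
  qed
qed

lemma Gm_carr: assumes f: "f \<in> carr DB.E" shows "Gm f \<in> carr CG.E"
proof -
  define Xb where "Xb = fst f"
  define Yb where "Yb = fst (snd f)"
  define g where "g = snd (snd f)"
  have Xb: "DBobj Xb" and Yb: "DBobj Yb" and gh: "g \<in> chom D (fst Xb) (fst Yb)"
    and comp: "\<And>h. h \<in> carrier G'' \<Longrightarrow> ccomp D (snd Yb h) (amor B h g) = ccomp D g (snd Xb h)"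
    using f unfolding eqv_carr_iff Xb_def Yb_def g_def by blast+
  define U where "U = fst Xb"
  define V where "V = fst Yb"
  have U: "U \<in> cobj D" and V: "V \<in> cobj D" using DB_parts(1)[OF Xb] DB_parts(1)[OF Yb] U_def V_def by simp_all
  have g: "g \<in> carr D" "fst g = U" "fst (snd g) = V" using gh unfolding chom_def U_def V_def by simp_all
  have phc: "snd (snd g) \<in> carr C" "cdom C (snd (snd g)) = fst U" "ccod C (snd (snd g)) = fst V"
    using Dcarr_C[OF g(1)] g by simp_all
  have compat: "ccomp C (ccomp C (bX Yb (\<pi> q)) (cg q V)) (amor A q (snd (snd g))) =
       ccomp C (snd (snd g)) (ccomp C (bX Xb (\<pi> q)) (cg q U))" if q: "q \<in> carrier G" for q
  proof -
    define h where "h = \<pi> q"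
    have h: "h \<in> carrier G''" using q h_def by simp
    note bX = bX_props[OF Xb h, folded U_def] and bY = bX_props[OF Yb h, folded V_def]
    have nat: "ccomp C (cg q V) (amor A q (snd (snd g))) = ccomp C (bm h g) (cg q U)"
      using gam_natural[OF q g(1)] g h_def by simp
    have cC: "ccomp C (bX Yb h) (bm h g) = ccomp C (snd (snd g)) (bX Xb h)"
      using comp[OF h] by simp
    note facts = q h h_def[symmetric] U V g phc bX(1-4) bY(1-4)
    have "ccomp C (ccomp C (bX Yb h) (cg q V)) (amor A q (snd (snd g))) =
          ccomp C (bX Yb h) (ccomp C (cg q V) (amor A q (snd (snd g))))" using facts by simp
    also have "\<dots> = ccomp C (bX Yb h) (ccomp C (bm h g) (cg q U))" by (simp only: nat)
    also have "\<dots> = ccomp C (ccomp C (bX Yb h) (bm h g)) (cg q U)" using facts by simp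
    also have "\<dots> = ccomp C (ccomp C (snd (snd g)) (bX Xb h)) (cg q U)" by (simp only: cC)
    also have "\<dots> = ccomp C (snd (snd g)) (ccomp C (bX Xb h) (cg q U))" using facts by simp
    finally show ?thesis by (simp add: h_def)
  qed
  show ?thesis
    unfolding eqv_carr_iff Gm_def fst_conv snd_conv Xb_def[symmetric] Yb_def[symmetric] g_def[symmetric]
  proof (intro conjI ballI)
    show "CGobj (Go Xb)" "CGobj (Go Yb)" using Go_obj Xb Yb by blast+
    show "snd (snd g) \<in> chom C (fst (Go Xb)) (fst (Go Yb))"
      using phc unfolding chom_def by (simp add: Go_def U_def V_def)
    fix q assume q: "q \<in> carrier G"
    show "ccomp C (snd (Go Yb) q) (amor A q (snd (snd g))) = ccomp C (snd (snd g)) (snd (Go Xb) q)"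
      using compat[OF q] q by (simp add: Go_def U_def V_def)
  qed
qed

lemma F_functor: "is_functor CG.E DB.E Fo Fm"
  unfolding is_functor_def
proof (intro conjI ballI impI)
  fix x assume "x \<in> cobj CG.E"
  then show "Fo x \<in> cobj DB.E" using Fo_obj by simp
next
  fix f assume f: "f \<in> carr CG.E"
  show "Fm f \<in> chom DB.E (Fo (cdom CG.E f)) (Fo (ccod CG.E f))"
    using Fm_carr[OF f] unfolding chom_def by (simp add: Fm_def)
next
  fix x assume "x \<in> cobj CG.E"
  show "Fm (cid CG.E x) = cid DB.E (Fo x)" by (simp add: Fm_def Fo_def)
next
  fix f g assume "f \<in> carr CG.E" "g \<in> carr CG.E" "ccod CG.E f = cdom CG.E g"
  then show "Fm (ccomp CG.E g f) = ccomp DB.E (Fm g) (Fm f)" by (simp add: Fm_def)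
qed

lemma G_functor: "is_functor DB.E CG.E Go Gm"
  unfolding is_functor_def
proof (intro conjI ballI impI)
  fix x assume "x \<in> cobj DB.E"
  then show "Go x \<in> cobj CG.E" using Go_obj by simp
next
  fix f assume f: "f \<in> carr DB.E"
  show "Gm f \<in> chom CG.E (Go (cdom DB.E f)) (Go (ccod DB.E f))"
    using Gm_carr[OF f] unfolding chom_def by (simp add: Gm_def)
next
  fix x assume "x \<in> cobj DB.E"
  show "Gm (cid DB.E x) = cid CG.E (Go x)" by (simp add: Gm_def Go_def)
next
  fix f g assume "f \<in> carr DB.E" "g \<in> carr DB.E" "ccod DB.E f = cdom DB.E g"
  then show "Gm (ccomp DB.E g f) = ccomp CG.E (Gm g) (Gm f)" by (simp add: Gm_def)
qed

lemma GFm: "f \<in> carr CG.E \<Longrightarrow> Gm (Fm f) = f"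
  by (simp add: Gm_def Fm_def eqv_carr_iff GF)

lemma FGm: assumes f: "f \<in> carr DB.E" shows "Fm (Gm f) = f"
proof -
  have Xb: "DBobj (fst f)" and Yb: "DBobj (fst (snd f))" and g: "snd (snd f) \<in> chom D (fst (fst f)) (fst (fst (snd f)))"
    using f unfolding eqv_carr_iff by blast+
  have "snd (snd f) = (fst (fst f), fst (fst (snd f)), snd (snd (snd (snd f))))"
    using g unfolding chom_def by (cases "snd (snd f)") auto
  then show ?thesis using FG[OF Xb] FG[OF Yb] F0_Go[OF Xb] F0_Go[OF Yb]
    by (simp add: Gm_def Fm_def)
qed

theorem equivalence: "cat_equivalent CG.E DB.E"
proof -
  interpret E1: cat CG.E by (rule cat.intro[OF CG.E_category])
  interpret E2: cat DB.E by (rule cat.intro[OF DB.E_category])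
  have 1: "is_nat_iso CG.E CG.E (Go \<circ> Fo) (Gm \<circ> Fm) id id (cid CG.E)"
    by (rule E1.id_nat_iso) (simp_all add: GF GFm)
  have 2: "is_nat_iso DB.E DB.E (Fo \<circ> Go) (Fm \<circ> Gm) id id (cid DB.E)"
    by (rule E2.id_nat_iso) (simp_all add: FG FGm del: eqv_cat_simps, simp_all add: FG)
  show ?thesis unfolding cat_equivalent_def using F_functor G_functor 1 2 by blast
qed

end

theorem mainTheorem4:
  fixes G :: "('g, 'b) monoid_scheme" and G'' :: "('h, 'c) monoid_scheme"
    and \<pi> :: "'g \<Rightarrow> 'h" and N :: "'g set"
    and C :: "('o, 'm) category" and A :: "('g, 'o, 'm) cat_action"
    and B :: "('h, ('g, 'o, 'm) eqv_ob, ('g, 'o, 'm) eqv_ar) cat_action"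
    and \<gamma> :: "'g \<Rightarrow> ('g, 'o, 'm) eqv_ob \<Rightarrow> ('g, 'o, 'm) eqv_ar"
  assumes "group G" and "group G''"
    and "\<pi> \<in> hom G G''" and "\<pi> ` carrier G = carrier G''"
    and "N \<lhd> G" and "kernel G G'' \<pi> = N"
    and "is_category C"
    and "is_action G C A"
    and "is_action G'' (eqv_cat G N C A) B"
    and "is_action_iso G (eqv_cat G N C A) (canon_action G N C A) (pullback_action \<pi> B) \<gamma>"
    and "restricts_to_canonical_trivialization G N C A B \<gamma>"
  shows "cat_equivalent (eqv_cat G (carrier G) C A) (eqv_cat G'' (carrier G'') (eqv_cat G N C A) B)"
proof -
  interpret main_setup G G'' \<pi> N C A B \<gamma> by (rule main_setup.intro[OF assms])
  show ?thesis by (rule equivalence)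
qed

end
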